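(* A finite group $G$ is mixable if and only if every nontrivial irreducible complex representation of $G$ is mixable.
   Context: A finite group $G$ is mixable if there exist fixed elements $g_1,\dots,g_k\in G$ and independent Bernoulli random variables $\epsilon_i\sim\mathrm{Ber}(p_i)$, $p_i\in[0,1]$, such that $g_1^{\epsilon_1}\cdots g_k^{\epsilon_k}$ is distributed exactly uniformly on $G$. An irreducible representation $\rho: G\to\mathrm{GL}_d(\mathbb{C})$ is mixable if there exist $g_1,\dots,g_k\in G$ and $p_1,\dots,p_k\in[0,1]$ with $\prod_{i=1}^k\big((1-p_i)I+p_i\rho(g_i)\big)=0$. (Equivalently, the theorem says $G$ is mixable iff its regular representation is mixable, a representation being called mixable when all its nontrivial irreducible components are.) *)

theory Defs
  imports "HOL-Algebra.Group" "HOL-Probability.Probability_Mass_Function"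
    "Jordan_Normal_Form.Matrix"
begin

(* Random product g_1^{e_1} ... g_k^{e_k} with independent e_i ~ Ber(p_i);
   the list entries are the pairs (g_i, p_i), leftmost factor first. *)
fun mix_pmf :: "('a, 'b) monoid_scheme \<Rightarrow> ('a \<times> real) list \<Rightarrow> 'a pmf" where
  "mix_pmf G [] = return_pmf \<one>\<^bsub>G\<^esub>"
| "mix_pmf G ((g, p) # xs) =
     bind_pmf (bernoulli_pmf p) (\<lambda>e.
       bind_pmf (mix_pmf G xs) (\<lambda>y. return_pmf (if e then g \<otimes>\<^bsub>G\<^esub> y else y)))"

definition mixable_group :: "('a, 'b) monoid_scheme \<Rightarrow> bool" where
  "mixable_group G \<longleftrightarrow>
     (\<exists>xs. (\<forall>(g, p) \<in> set xs. g \<in> carrier G \<and> 0 \<le> p \<and> p \<le> 1) \<and>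
           mix_pmf G xs = pmf_of_set (carrier G))"

definition representation :: "('a, 'b) monoid_scheme \<Rightarrow> nat \<Rightarrow> ('a \<Rightarrow> complex mat) \<Rightarrow> bool" where
  "representation G d \<rho> \<longleftrightarrow>
     (\<forall>g \<in> carrier G. \<rho> g \<in> carrier_mat d d) \<and>
     \<rho> \<one>\<^bsub>G\<^esub> = 1\<^sub>m d \<and>
     (\<forall>g \<in> carrier G. \<forall>h \<in> carrier G. \<rho> (g \<otimes>\<^bsub>G\<^esub> h) = \<rho> g * \<rho> h)"

definition invariant_subspace :: "('a, 'b) monoid_scheme \<Rightarrow> nat \<Rightarrow> ('a \<Rightarrow> complex mat) \<Rightarrow> complex vec set \<Rightarrow> bool" where
  "invariant_subspace G d \<rho> W \<longleftrightarrow>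
     W \<subseteq> carrier_vec d \<and> 0\<^sub>v d \<in> W \<and>
     (\<forall>v \<in> W. \<forall>w \<in> W. v + w \<in> W) \<and>
     (\<forall>c. \<forall>v \<in> W. c \<cdot>\<^sub>v v \<in> W) \<and>
     (\<forall>g \<in> carrier G. \<forall>v \<in> W. \<rho> g *\<^sub>v v \<in> W)"

definition irreducible_rep :: "('a, 'b) monoid_scheme \<Rightarrow> nat \<Rightarrow> ('a \<Rightarrow> complex mat) \<Rightarrow> bool" where
  "irreducible_rep G d \<rho> \<longleftrightarrow>
     representation G d \<rho> \<and> d > 0 \<and>
     (\<forall>W. invariant_subspace G d \<rho> W \<longrightarrow> W = {0\<^sub>v d} \<or> W = carrier_vec d)"

definition trivial_rep :: "('a, 'b) monoid_scheme \<Rightarrow> nat \<Rightarrow> ('a \<Rightarrow> complex mat) \<Rightarrow> bool" where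
  "trivial_rep G d \<rho> \<longleftrightarrow> (\<forall>g \<in> carrier G. \<rho> g = 1\<^sub>m d)"

definition mixable_rep :: "('a, 'b) monoid_scheme \<Rightarrow> nat \<Rightarrow> ('a \<Rightarrow> complex mat) \<Rightarrow> bool" where
  "mixable_rep G d \<rho> \<longleftrightarrow>
     (\<exists>xs. (\<forall>(g, p) \<in> set xs. g \<in> carrier G \<and> 0 \<le> p \<and> p \<le> 1) \<and>
           foldr (\<lambda>(g, p) M. (complex_of_real (1 - p) \<cdot>\<^sub>m 1\<^sub>m d + complex_of_real p \<cdot>\<^sub>m \<rho> g) * M)
             xs (1\<^sub>m d) = 0\<^sub>m d d)"

end

theory Submission
  imports Defs "Jordan_Normal_Form.Determinant"
begin

no_notation vec_nth (infixl "$" 90)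


definition inj_mat :: "complex mat \<Rightarrow> bool" where
  "inj_mat A \<longleftrightarrow> (\<forall>x\<in>carrier_vec (dim_col A). A *\<^sub>v x = 0\<^sub>v (dim_row A) \<longrightarrow> x = 0\<^sub>v (dim_col A))"

lemma mult_vec_index_sum:
  assumes "A \<in> carrier_mat r c" "x \<in> carrier_vec c" "i < r"
  shows "(A *\<^sub>v x) $ i = (\<Sum>j<c. A $$ (i,j) * x $ j)"
  using assms by (auto simp: scalar_prod_def row_def lessThan_atLeast0 ac_simps)

lemma inj_le:
  assumes A: "A \<in> carrier_mat d m" and inj: "inj_mat A"
  shows "m \<le> d"
proof (rule ccontr)
  assume "\<not> m \<le> d"
  hence md: "d < m" by simp
  define A' where "A' = mat m m (\<lambda>(i,j). if i < d then A $$ (i,j) else 0)"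
  have A'c: "A' \<in> carrier_mat m m" unfolding A'_def by auto
  have "A' = mat\<^sub>r m m (\<lambda>i. if i = m - 1 then 0\<^sub>v m else row A' i)"
    by (rule eq_matI) (use md in \<open>auto simp: A'_def\<close>)
  hence "Determinant.det A' = 0"
    using Determinant.det_row_0[of "m - 1" m "\<lambda>i. row A' i"] md A'c by auto
  then obtain v where v: "v \<in> carrier_vec m" "v \<noteq> 0\<^sub>v m" "A' *\<^sub>v v = 0\<^sub>v m"
    using det_0_iff_vec_prod_zero[OF A'c] by auto
  have "A *\<^sub>v v = 0\<^sub>v d"
  proof (rule eq_vecI)
    fix i assume "i < dim_vec (0\<^sub>v d :: complex vec)"
    hence i: "i < d" by simp
    have "(A' *\<^sub>v v) $ i = 0" using v md i by simp
    moreover have "(A' *\<^sub>v v) $ i = (\<Sum>j<m. A' $$ (i,j) * v $ j)"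
      using i md by (intro mult_vec_index_sum[OF A'c v(1)]) auto
    moreover have "(A *\<^sub>v v) $ i = (\<Sum>j<m. A $$ (i,j) * v $ j)"
      using i md by (intro mult_vec_index_sum[OF A v(1)]) auto
    moreover have "(\<Sum>j<m. A' $$ (i,j) * v $ j) = (\<Sum>j<m. A $$ (i,j) * v $ j)"
      using i md by (intro sum.cong) (auto simp: A'_def)
    ultimately show "(A *\<^sub>v v) $ i = 0\<^sub>v d $ i" using i by simp
  qed (use A in simp)
  with inj A v show False unfolding inj_mat_def by auto
qed

lemma square_inv:
  assumes A: "A \<in> carrier_mat d d" and inj: "inj_mat A"
  shows "\<exists>B. B \<in> carrier_mat d d \<and> B * A = 1\<^sub>m d \<and> A * B = 1\<^sub>m d"
proof -
  have "Determinant.det A \<noteq> 0"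
    using det_0_iff_vec_prod_zero[OF A] inj A unfolding inj_mat_def by auto
  from det_non_zero_imp_unit[OF A this, unfolded Units_def, of "()"]
  show ?thesis by (auto simp: ring_mat_def)
qed

lemma square_surj:
  assumes A: "A \<in> carrier_mat d d" and inj: "inj_mat A" and y: "y \<in> carrier_vec d"
  shows "\<exists>x\<in>carrier_vec d. A *\<^sub>v x = y"
proof -
  obtain B where B: "B \<in> carrier_mat d d" "A * B = 1\<^sub>m d" using square_inv[OF A inj] by auto
  have "A *\<^sub>v (B *\<^sub>v y) = y" using A B y by (simp add: assoc_mult_mat_vec[symmetric])
  thus ?thesis using B y by force
qed

definition span_cols :: "nat \<Rightarrow> complex vec list \<Rightarrow> complex vec set" where
  "span_cols d vs = {mat_of_cols d vs *\<^sub>v x | x. x \<in> carrier_vec (length vs)}"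

definition subsp :: "nat \<Rightarrow> complex vec set \<Rightarrow> bool" where
  "subsp d W \<longleftrightarrow> W \<subseteq> carrier_vec d \<and> 0\<^sub>v d \<in> W \<and> (\<forall>v\<in>W. \<forall>w\<in>W. v + w \<in> W)
     \<and> (\<forall>c. \<forall>v\<in>W. c \<cdot>\<^sub>v v \<in> W)"

lemma snoc_identity:
  fixes w :: "complex vec"
  assumes vs: "set vs \<subseteq> carrier_vec d" and w: "w \<in> carrier_vec d"
    and x: "x \<in> carrier_vec (Suc (length vs))"
  shows "mat_of_cols d (vs @ [w]) *\<^sub>v x =
    mat_of_cols d vs *\<^sub>v vec (length vs) (\<lambda>i. x $ i) + x $ (length vs) \<cdot>\<^sub>v w"
proof (rule eq_vecI)
  fix i assume "i < dim_vec (mat_of_cols d vs *\<^sub>v vec (length vs) (\<lambda>i. x $ i) + x $ (length vs) \<cdot>\<^sub>v w)"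
  hence i: "i < d" using w by simp
  let ?m = "length vs"
  have "(mat_of_cols d (vs @ [w]) *\<^sub>v x) $ i = (\<Sum>j<Suc ?m. mat_of_cols d (vs @ [w]) $$ (i,j) * x $ j)"
    using i x by (intro mult_vec_index_sum) auto
  also have "\<dots> = (\<Sum>j<?m. mat_of_cols d (vs @ [w]) $$ (i,j) * x $ j) + w $ i * x $ ?m"
    using i by (simp add: mat_of_cols_index)
  also have "(\<Sum>j<?m. mat_of_cols d (vs @ [w]) $$ (i,j) * x $ j) = (\<Sum>j<?m. mat_of_cols d vs $$ (i,j) * vec ?m (\<lambda>i. x $ i) $ j)"
    using i by (intro sum.cong) (auto simp: mat_of_cols_index nth_append)
  also have "\<dots> = (mat_of_cols d vs *\<^sub>v vec (length vs) (\<lambda>i. x $ i)) $ i"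
    using i by (intro mult_vec_index_sum[symmetric]) auto
  finally show "(mat_of_cols d (vs @ [w]) *\<^sub>v x) $ i = (mat_of_cols d vs *\<^sub>v vec (length vs) (\<lambda>i. x $ i) + x $ (length vs) \<cdot>\<^sub>v w) $ i"
    using i w by (simp add: mult.commute[of "w $ i" "x $ length vs"])
qed (use w in auto)

lemma span_Nil: "span_cols d [] = {0\<^sub>v d}"
proof -
  have "mat_of_cols d [] *\<^sub>v x = 0\<^sub>v d" if "x \<in> carrier_vec 0" for x :: "complex vec"
    using that by (auto intro!: eq_vecI simp: scalar_prod_def)
  thus ?thesis unfolding span_cols_def by (auto intro!: exI[of _ "0\<^sub>v 0"])
qed

lemma span_sub:
  assumes W: "subsp d W" and vs: "set vs \<subseteq> W"
  shows "span_cols d vs \<subseteq> W"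
  using vs
proof (induction vs rule: rev_induct)
  case Nil thus ?case using W by (simp add: span_Nil subsp_def)
next
  case (snoc w vs)
  have Wc: "W \<subseteq> carrier_vec d" using W by (simp add: subsp_def)
  show ?case
  proof
    fix u assume "u \<in> span_cols d (vs @ [w])"
    then obtain x where x: "x \<in> carrier_vec (Suc (length vs))" and u: "u = mat_of_cols d (vs @ [w]) *\<^sub>v x"
      unfolding span_cols_def by auto
    have "u = mat_of_cols d vs *\<^sub>v vec (length vs) (\<lambda>i. x $ i) + x $ (length vs) \<cdot>\<^sub>v w"
      using u snoc_identity[OF _ _ x] snoc.prems Wc by auto
    moreover have "mat_of_cols d vs *\<^sub>v vec (length vs) (\<lambda>i. x $ i) \<in> W"
    proof -
      have "span_cols d vs \<subseteq> W" using snoc by auto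
      thus ?thesis unfolding span_cols_def using vec_carrier[of "length vs"] by blast
    qed
    moreover have "x $ (length vs) \<cdot>\<^sub>v w \<in> W" using W snoc.prems by (auto simp: subsp_def)
    ultimately show "u \<in> W" using W by (auto simp: subsp_def)
  qed
qed

lemma indep_snoc:
  assumes vs: "set vs \<subseteq> carrier_vec d" and w: "w \<in> carrier_vec d"
    and ind: "inj_mat (mat_of_cols d vs)" and nw: "w \<notin> span_cols d vs"
  shows "inj_mat (mat_of_cols d (vs @ [w]))"
  unfolding inj_mat_def
proof (intro ballI impI)
  let ?m = "length vs"
  fix x :: "complex vec" assume "x \<in> carrier_vec (dim_col (mat_of_cols d (vs @ [w])))"
  hence x: "x \<in> carrier_vec (Suc ?m)" by simp
  assume "mat_of_cols d (vs @ [w]) *\<^sub>v x = 0\<^sub>v (dim_row (mat_of_cols d (vs @ [w])))"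
  hence eq: "mat_of_cols d vs *\<^sub>v vec ?m (\<lambda>i. x $ i) + x $ ?m \<cdot>\<^sub>v w = 0\<^sub>v d"
    using snoc_identity[OF vs w x] by simp
  let ?y = "vec ?m (\<lambda>i. x $ i)"
  have xm: "x $ ?m = 0"
  proof (rule ccontr)
    assume nz: "x $ ?m \<noteq> 0"
    have "w = mat_of_cols d vs *\<^sub>v ((- 1 / x $ ?m) \<cdot>\<^sub>v ?y)"
    proof -
      have "mat_of_cols d vs *\<^sub>v ((- 1 / x $ ?m) \<cdot>\<^sub>v ?y) = (- 1 / x $ ?m) \<cdot>\<^sub>v (mat_of_cols d vs *\<^sub>v ?y)"
        by (rule mult_mat_vec) auto
      also have "mat_of_cols d vs *\<^sub>v ?y = - (x $ ?m \<cdot>\<^sub>v w)"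
      proof (rule eq_vecI)
        fix i assume "i < dim_vec (- (x $ ?m \<cdot>\<^sub>v w))"
        hence i: "i < d" using w by simp
        have "(mat_of_cols d vs *\<^sub>v ?y + x $ ?m \<cdot>\<^sub>v w) $ i = 0"
          using arg_cong[OF eq, of "\<lambda>v. v $ i"] i by simp
        hence "(mat_of_cols d vs *\<^sub>v ?y) $ i + x $ ?m * w $ i = 0"
          using i w by (simp del: index_mult_mat_vec)
        thus "(mat_of_cols d vs *\<^sub>v ?y) $ i = (- (x $ ?m \<cdot>\<^sub>v w)) $ i"
          using i w by (simp del: index_mult_mat_vec add: eq_neg_iff_add_eq_0)
      qed (use w in simp)
      finally show ?thesis using nz w by (auto intro!: eq_vecI simp: field_simps)
    qed
    hence "w \<in> span_cols d vs" unfolding span_cols_def by force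
    with nw show False by simp
  qed
  have "0 \<cdot>\<^sub>v w = 0\<^sub>v d" using w by (auto intro!: eq_vecI)
  with eq xm have "mat_of_cols d vs *\<^sub>v ?y = 0\<^sub>v d"
  proof -
    have c: "mat_of_cols d vs *\<^sub>v ?y \<in> carrier_vec d"
      by (rule mult_mat_vec_carrier[OF mat_of_cols_carrier(1)]) simp
    show ?thesis using eq xm \<open>0 \<cdot>\<^sub>v w = 0\<^sub>v d\<close> right_zero_vec[OF c] by simp
  qed
  with ind have y0: "?y = 0\<^sub>v ?m" unfolding inj_mat_def by auto
  show "x = 0\<^sub>v (dim_col (mat_of_cols d (vs @ [w])))"
  proof (rule eq_vecI)
    fix i assume "i < dim_vec (0\<^sub>v (dim_col (mat_of_cols d (vs @ [w]))) :: complex vec)"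
    hence "i < Suc ?m" by simp
    thus "x $ i = 0\<^sub>v (dim_col (mat_of_cols d (vs @ [w]))) $ i"
      using xm arg_cong[OF y0, of "\<lambda>v. v $ i"] by (cases "i = ?m") auto
  qed (use x in auto)
qed

lemma extend_basis:
  assumes W: "subsp d W" and vs: "set vs \<subseteq> W" and ind: "inj_mat (mat_of_cols d vs)"
  shows "\<exists>ws. set ws \<subseteq> W \<and> inj_mat (mat_of_cols d (vs @ ws)) \<and> span_cols d (vs @ ws) = W"
  using vs ind
proof (induction "d - length vs" arbitrary: vs rule: less_induct)
  case less
  have Wc: "W \<subseteq> carrier_vec d" using W by (simp add: subsp_def)
  show ?case
  proof (cases "span_cols d vs = W")
    case True thus ?thesis using less.prems by (intro exI[of _ "[]"]) auto
  next
    case False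
    with span_sub[OF W less.prems(1)] obtain w where w: "w \<in> W" "w \<notin> span_cols d vs" by auto
    have ind2: "inj_mat (mat_of_cols d (vs @ [w]))"
      using indep_snoc[OF _ _ less.prems(2) w(2)] less.prems(1) w Wc by auto
    have "length (vs @ [w]) \<le> d" using inj_le[OF mat_of_cols_carrier(1) ind2] by simp
    hence "d - length (vs @ [w]) < d - length vs" by simp
    from less.hyps[OF this _ ind2] less.prems w obtain ws where
      "set ws \<subseteq> W" "inj_mat (mat_of_cols d ((vs @ [w]) @ ws))" "span_cols d ((vs @ [w]) @ ws) = W" by auto
    thus ?thesis using w by (intro exI[of _ "w # ws"]) auto
  qed
qed

lemma basis_exists:
  assumes W: "subsp d W"
  shows "\<exists>vs. set vs \<subseteq> W \<and> inj_mat (mat_of_cols d vs) \<and> span_cols d vs = W"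
proof -
  have "inj_mat (mat_of_cols d [])" unfolding inj_mat_def by auto
  from extend_basis[OF W _ this] show ?thesis by auto
qed


definition fac :: "nat \<Rightarrow> ('a \<Rightarrow> complex mat) \<Rightarrow> 'a \<Rightarrow> real \<Rightarrow> complex mat" where
  "fac d \<rho> g p = complex_of_real (1 - p) \<cdot>\<^sub>m 1\<^sub>m d + complex_of_real p \<cdot>\<^sub>m \<rho> g"

definition PT :: "nat \<Rightarrow> ('a \<Rightarrow> complex mat) \<Rightarrow> ('a \<times> real) list \<Rightarrow> complex mat" where
  "PT d \<rho> xs = foldr (\<lambda>(g, p) M. (complex_of_real (1 - p) \<cdot>\<^sub>m 1\<^sub>m d + complex_of_real p \<cdot>\<^sub>m \<rho> g) * M) xs (1\<^sub>m d)"

lemma PT_Nil[simp]: "PT d \<rho> [] = 1\<^sub>m d" by (simp add: PT_def)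
lemma PT_Cons[simp]: "PT d \<rho> ((g,p) # xs) = fac d \<rho> g p * PT d \<rho> xs"
  by (simp add: PT_def fac_def)

lemma fac_carrier[simp]: "\<rho> g \<in> carrier_mat d d \<Longrightarrow> fac d \<rho> g p \<in> carrier_mat d d"
  by (simp add: fac_def)

lemma PT_carrier:
  "(\<And>g p. (g,p) \<in> set xs \<Longrightarrow> \<rho> g \<in> carrier_mat d d) \<Longrightarrow> PT d \<rho> xs \<in> carrier_mat d d"
proof (induction xs)
  case Nil thus ?case by simp
next
  case (Cons a xs)
  obtain g p where a: "a = (g,p)" by force
  have "\<rho> g \<in> carrier_mat d d" using Cons.prems[of g p] a by simp
  hence "fac d \<rho> g p \<in> carrier_mat d d" by simp
  moreover have "PT d \<rho> xs \<in> carrier_mat d d" using Cons by auto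
  ultimately show ?case using a by simp
qed

lemma PT_append:
  assumes "\<And>g p. (g,p) \<in> set (xs @ ys) \<Longrightarrow> \<rho> g \<in> carrier_mat d d"
  shows "PT d \<rho> (xs @ ys) = PT d \<rho> xs * PT d \<rho> ys"
  using assms
proof (induction xs)
  case Nil thus ?case using PT_carrier[of ys \<rho> d] by simp
next
  case (Cons a xs)
  obtain g p where a: "a = (g,p)" by force
  have c1: "fac d \<rho> g p \<in> carrier_mat d d" using Cons.prems[of g p] a by simp
  have c2: "PT d \<rho> xs \<in> carrier_mat d d" by (rule PT_carrier) (use Cons.prems in auto)
  have c3: "PT d \<rho> ys \<in> carrier_mat d d" by (rule PT_carrier) (use Cons.prems in auto)
  have IH: "PT d \<rho> (xs @ ys) = PT d \<rho> xs * PT d \<rho> ys" using Cons.IH Cons.prems by auto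
  show ?case using IH a by (simp add: assoc_mult_mat[OF c1 c2 c3])
qed

lemma smult_mat_mult_vec: "A \<in> carrier_mat r c \<Longrightarrow> v \<in> carrier_vec c \<Longrightarrow>
  ((a::complex) \<cdot>\<^sub>m A) *\<^sub>v v = a \<cdot>\<^sub>v (A *\<^sub>v v)"
  by (rule eq_vecI) auto

lemma PT_fixed:
  assumes "\<And>g p. (g,p) \<in> set xs \<Longrightarrow> \<rho> g \<in> carrier_mat d d \<and> \<rho> g *\<^sub>v v = v"
    and v: "v \<in> carrier_vec d"
  shows "PT d \<rho> xs *\<^sub>v v = v"
  using assms(1)
proof (induction xs)
  case Nil thus ?case using v by simp
next
  case (Cons a xs)
  obtain g p where a: "a = (g,p)" by force
  have c1: "\<rho> g \<in> carrier_mat d d" "\<rho> g *\<^sub>v v = v" using Cons.prems a by auto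
  have c2: "PT d \<rho> xs \<in> carrier_mat d d" by (rule PT_carrier) (use Cons.prems in auto)
  have IH: "PT d \<rho> xs *\<^sub>v v = v" using Cons by auto
  have "fac d \<rho> g p *\<^sub>v v = v"
  proof -
    have "fac d \<rho> g p *\<^sub>v v = complex_of_real (1 - p) \<cdot>\<^sub>v (1\<^sub>m d *\<^sub>v v) + complex_of_real p \<cdot>\<^sub>v (\<rho> g *\<^sub>v v)"
      unfolding fac_def using c1 v
      by (simp add: add_mult_distrib_mat_vec[of _ d d] smult_mat_mult_vec[of _ d d])
    also have "\<dots> = (complex_of_real (1 - p) + complex_of_real p) \<cdot>\<^sub>v v"
      using c1 v by (simp only: add_smult_distrib_vec one_mult_mat_vec)
    also have "\<dots> = v" by simp
    finally show ?thesis .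
  qed
  thus ?case using a c1 c2 v IH by (simp add: assoc_mult_mat_vec[of "fac d \<rho> g p" d d "PT d \<rho> xs" d v])
qed

lemma PT_intertwine:
  assumes B: "B \<in> carrier_mat k m"
    and "\<And>g p. (g,p) \<in> set xs \<Longrightarrow> \<sigma> g \<in> carrier_mat k k \<and> \<tau> g \<in> carrier_mat m m \<and> \<sigma> g * B = B * \<tau> g"
  shows "PT k \<sigma> xs * B = B * PT m \<tau> xs"
  using assms(2)
proof (induction xs)
  case Nil thus ?case using B by simp
next
  case (Cons a xs)
  obtain g p where a: "a = (g,p)" by force
  have c1: "\<sigma> g \<in> carrier_mat k k" "\<tau> g \<in> carrier_mat m m" "\<sigma> g * B = B * \<tau> g"
    using Cons.prems a by auto
  have c2: "PT k \<sigma> xs \<in> carrier_mat k k" by (rule PT_carrier) (use Cons.prems in auto)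
  have c3: "PT m \<tau> xs \<in> carrier_mat m m" by (rule PT_carrier) (use Cons.prems in auto)
  have IH: "PT k \<sigma> xs * B = B * PT m \<tau> xs" using Cons by auto
  have F: "fac k \<sigma> g p * B = B * fac m \<tau> g p"
  proof -
    let ?a = "complex_of_real (1 - p)" and ?b = "complex_of_real p"
    have "fac k \<sigma> g p * B = ?a \<cdot>\<^sub>m (1\<^sub>m k * B) + ?b \<cdot>\<^sub>m (\<sigma> g * B)"
      unfolding fac_def using c1 B
      by (simp add: add_mult_distrib_mat[of _ k k] mult_smult_assoc_mat[of _ k k])
    also have "\<dots> = ?a \<cdot>\<^sub>m (B * 1\<^sub>m m) + ?b \<cdot>\<^sub>m (B * \<tau> g)" using c1 B by simp
    also have "\<dots> = B * (?a \<cdot>\<^sub>m 1\<^sub>m m) + B * (?b \<cdot>\<^sub>m \<tau> g)"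
      using c1 B by (simp only: mult_smult_distrib[OF B one_carrier_mat] mult_smult_distrib[OF B c1(2)])
    also have "\<dots> = B * fac m \<tau> g p"
      unfolding fac_def using c1 B by (intro mult_add_distrib_mat[symmetric]) auto
    finally show ?thesis .
  qed
  have "PT k \<sigma> (a # xs) * B = fac k \<sigma> g p * (PT k \<sigma> xs * B)"
    using a c1 c2 B by (simp add: assoc_mult_mat[of _ k k _ k _ m])
  also have "\<dots> = (fac k \<sigma> g p * B) * PT m \<tau> xs"
    using IH c1 c3 B by (simp add: assoc_mult_mat[of _ k k _ m _ m])
  also have "\<dots> = B * PT m \<tau> (a # xs)"
    using F a c1 c3 B by (simp add: assoc_mult_mat[of _ k m _ m _ m])
  finally show ?case .
qed


definition msum :: "nat \<Rightarrow> nat \<Rightarrow> 'x set \<Rightarrow> ('x \<Rightarrow> complex mat) \<Rightarrow> complex mat" where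
  "msum r c A f = mat r c (\<lambda>(i,j). \<Sum>x\<in>A. f x $$ (i,j))"

lemma msum_carrier[simp]: "msum r c A f \<in> carrier_mat r c" by (simp add: msum_def)
lemma msum_dims[simp]: "dim_row (msum r c A f) = r" "dim_col (msum r c A f) = c" by (simp_all add: msum_def)

lemma msum_cong: "(\<And>x. x \<in> A \<Longrightarrow> f x = g x) \<Longrightarrow> msum r c A f = msum r c A g"
  unfolding msum_def by (intro eq_matI) auto

lemma msum_reindex: assumes "bij_betw \<phi> A A" shows "msum r c A (\<lambda>x. f (\<phi> x)) = msum r c A f"
  unfolding msum_def
proof (intro eq_matI)
  fix i j assume "i < dim_row (Matrix.mat r c (\<lambda>(i, j). \<Sum>x\<in>A. f x $$ (i, j)))"
     "j < dim_col (Matrix.mat r c (\<lambda>(i, j). \<Sum>x\<in>A. f x $$ (i, j)))"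
  thus "Matrix.mat r c (\<lambda>(i, j). \<Sum>x\<in>A. f (\<phi> x) $$ (i, j)) $$ (i, j) =
        Matrix.mat r c (\<lambda>(i, j). \<Sum>x\<in>A. f x $$ (i, j)) $$ (i, j)"
    using sum.reindex_bij_betw[OF assms, of "\<lambda>y. f y $$ (i,j)"] by simp
qed auto

lemma msum_const_one: "finite A \<Longrightarrow> msum r r A (\<lambda>x. 1\<^sub>m r) = of_nat (card A) \<cdot>\<^sub>m 1\<^sub>m r"
  unfolding msum_def by (intro eq_matI) auto

lemma mult_mat_index_sum:
  assumes "(A :: complex mat) \<in> carrier_mat r k" "B \<in> carrier_mat k c" "i < r" "j < c"
  shows "(A * B) $$ (i,j) = (\<Sum>l<k. A $$ (i,l) * B $$ (l,j))"
  using assms by (simp add: scalar_prod_def lessThan_atLeast0)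

lemma msum_mult_right:
  assumes "\<And>x. x \<in> A \<Longrightarrow> f x \<in> carrier_mat r k" and B: "B \<in> carrier_mat k c"
  shows "msum r k A f * B = msum r c A (\<lambda>x. f x * B)"
proof (rule eq_matI)
  fix i j assume ij: "i < dim_row (msum r c A (\<lambda>x. f x * B))" "j < dim_col (msum r c A (\<lambda>x. f x * B))"
  have i: "i < r" and j: "j < c" using ij by auto
  have "(msum r k A f * B) $$ (i,j) = (\<Sum>l<k. (\<Sum>x\<in>A. f x $$ (i,l)) * B $$ (l,j))"
    using i j B by (simp add: msum_def scalar_prod_def lessThan_atLeast0)
  also have "\<dots> = (\<Sum>x\<in>A. \<Sum>l<k. f x $$ (i,l) * B $$ (l,j))"
    by (simp add: sum_distrib_right sum.swap[of _ A])
  also have "\<dots> = msum r c A (\<lambda>x. f x * B) $$ (i,j)"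
    using i j B assms(1) by (simp add: msum_def mult_mat_index_sum[of _ r k B c])
  finally show "(msum r k A f * B) $$ (i,j) = msum r c A (\<lambda>x. f x * B) $$ (i,j)" .
qed (use B in auto)

lemma msum_mult_left:
  assumes "\<And>x. x \<in> A \<Longrightarrow> f x \<in> carrier_mat k c" and B: "B \<in> carrier_mat r k"
  shows "B * msum k c A f = msum r c A (\<lambda>x. B * f x)"
proof (rule eq_matI)
  fix i j assume ij: "i < dim_row (msum r c A (\<lambda>x. B * f x))" "j < dim_col (msum r c A (\<lambda>x. B * f x))"
  have i: "i < r" and j: "j < c" using ij by auto
  have "(B * msum k c A f) $$ (i,j) = (\<Sum>l<k. B $$ (i,l) * (\<Sum>x\<in>A. f x $$ (l,j)))"
    using i j B by (simp add: msum_def scalar_prod_def lessThan_atLeast0)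
  also have "\<dots> = (\<Sum>x\<in>A. \<Sum>l<k. B $$ (i,l) * f x $$ (l,j))"
    by (simp add: sum_distrib_left sum.swap[of _ A])
  also have "\<dots> = msum r c A (\<lambda>x. B * f x) $$ (i,j)"
    using i j B assms(1) by (simp add: msum_def mult_mat_index_sum[of B r k _ c])
  finally show "(B * msum k c A f) $$ (i,j) = msum r c A (\<lambda>x. B * f x) $$ (i,j)" .
qed (use B in auto)

lemma msum_mult_vec:
  assumes "\<And>x. x \<in> A \<Longrightarrow> f x \<in> carrier_mat r c" and v: "v \<in> carrier_vec c" and i: "i < r"
  shows "(msum r c A f *\<^sub>v v) $ i = (\<Sum>x\<in>A. (f x *\<^sub>v v) $ i)"
proof -
  have "(msum r c A f *\<^sub>v v) $ i = (\<Sum>l<c. (\<Sum>x\<in>A. f x $$ (i,l)) * v $ l)"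
    using i v by (simp add: msum_def scalar_prod_def lessThan_atLeast0)
  also have "\<dots> = (\<Sum>x\<in>A. \<Sum>l<c. f x $$ (i,l) * v $ l)"
    by (simp add: sum_distrib_right sum.swap[of _ A])
  also have "\<dots> = (\<Sum>x\<in>A. (f x *\<^sub>v v) $ i)"
  proof (rule sum.cong[OF refl])
    fix x assume "x \<in> A"
    thus "(\<Sum>l<c. f x $$ (i,l) * v $ l) = (f x *\<^sub>v v) $ i"
      using mult_vec_index_sum[of "f x" r c v i] i v assms(1) by simp
  qed
  finally show ?thesis .
qed

lemma group_bij_left:
  assumes "group G" "g \<in> carrier G"
  shows "bij_betw (\<lambda>h. g \<otimes>\<^bsub>G\<^esub> h) (carrier G) (carrier G)"
proof -
  interpret group G by fact
  show ?thesis
  proof (rule bij_betw_byWitness[where f' = "\<lambda>h. inv\<^bsub>G\<^esub> g \<otimes>\<^bsub>G\<^esub> h"])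
    show "\<forall>a\<in>carrier G. inv\<^bsub>G\<^esub> g \<otimes>\<^bsub>G\<^esub> (g \<otimes>\<^bsub>G\<^esub> a) = a"
      using assms(2) by (simp add: m_assoc[symmetric])
    show "\<forall>a\<in>carrier G. g \<otimes>\<^bsub>G\<^esub> (inv\<^bsub>G\<^esub> g \<otimes>\<^bsub>G\<^esub> a) = a"
      using assms(2) by (simp add: m_assoc[symmetric])
  qed (use assms(2) in auto)
qed

lemma col_as_mult: "(B :: complex mat) \<in> carrier_mat d m \<Longrightarrow> j < m \<Longrightarrow> col B j = B *\<^sub>v unit_vec m j"
  by (rule eq_vecI) auto

lemma inj_mat_cancel:
  fixes X Y :: "complex mat"
  assumes B: "B \<in> carrier_mat d m" and inj: "inj_mat B"
    and X: "X \<in> carrier_mat m c" and Y: "Y \<in> carrier_mat m c" and eq: "B * X = B * Y"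
  shows "X = Y"
proof (rule mat_col_eqI)
  fix j assume "j < dim_col Y"
  hence j: "j < c" using Y by simp
  have "B *\<^sub>v (col X j - col Y j) = B *\<^sub>v col X j - B *\<^sub>v col Y j"
    using B X Y j by (intro mult_minus_distrib_mat_vec) auto
  also have "B *\<^sub>v col X j = col (B * X) j" using B X j by simp
  also have "B *\<^sub>v col Y j = col (B * Y) j" using B Y j by simp
  finally have "B *\<^sub>v (col X j - col Y j) = 0\<^sub>v d" using eq B Y j by simp
  moreover have "col X j - col Y j \<in> carrier_vec m" using X Y j by simp
  ultimately have "col X j - col Y j = 0\<^sub>v m" using inj B unfolding inj_mat_def by simp
  show "col X j = col Y j"
  proof (rule eq_vecI)
    fix i assume "i < dim_vec (col Y j)"
    hence i: "i < m" using Y by simp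
    have "(col X j - col Y j) $ i = 0" using \<open>col X j - col Y j = 0\<^sub>v m\<close> i by simp
    thus "col X j $ i = col Y j $ i" using i X Y by simp
  qed (use X Y in simp)
qed (use X Y in auto)


lemma rep_carrier: "representation G d \<sigma> \<Longrightarrow> g \<in> carrier G \<Longrightarrow> \<sigma> g \<in> carrier_mat d d"
  by (simp add: representation_def)
lemma rep_one: "representation G d \<sigma> \<Longrightarrow> \<sigma> \<one>\<^bsub>G\<^esub> = 1\<^sub>m d"
  by (simp add: representation_def)
lemma rep_mult: "representation G d \<sigma> \<Longrightarrow> g \<in> carrier G \<Longrightarrow> h \<in> carrier G \<Longrightarrow>
  \<sigma> (g \<otimes>\<^bsub>G\<^esub> h) = \<sigma> g * \<sigma> h"
  by (simp add: representation_def)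

lemma mult_zero_vec_right[simp]: "(A :: complex mat) \<in> carrier_mat r c \<Longrightarrow> A *\<^sub>v 0\<^sub>v c = 0\<^sub>v r"
  by (intro eq_vecI) (auto simp: scalar_prod_def)

lemma subrep:
  assumes grp: "group G" and rep: "representation G d \<sigma>"
    and B: "B \<in> carrier_mat d m" and inj: "inj_mat B"
    and inv: "\<And>g x. g \<in> carrier G \<Longrightarrow> x \<in> carrier_vec m \<Longrightarrow> \<exists>y\<in>carrier_vec m. \<sigma> g *\<^sub>v (B *\<^sub>v x) = B *\<^sub>v y"
  shows "\<exists>\<tau>. representation G m \<tau> \<and> (\<forall>g\<in>carrier G. \<sigma> g * B = B * \<tau> g)"
proof -
  have ex: "\<exists>T. T \<in> carrier_mat m m \<and> \<sigma> g * B = B * T" if g: "g \<in> carrier G" for g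
  proof -
    define y where "y j = (SOME y. y \<in> carrier_vec m \<and> \<sigma> g *\<^sub>v (B *\<^sub>v unit_vec m j) = B *\<^sub>v y)" for j
    have y: "y j \<in> carrier_vec m \<and> \<sigma> g *\<^sub>v (B *\<^sub>v unit_vec m j) = B *\<^sub>v y j" for j
      unfolding y_def by (rule someI_ex) (use inv[OF g unit_vec_carrier] in auto)
    define T where "T = mat m m (\<lambda>(i,j). y j $ i)"
    have T: "T \<in> carrier_mat m m" by (simp add: T_def)
    have sg: "\<sigma> g \<in> carrier_mat d d" using rep_carrier[OF rep g] .
    have "\<sigma> g * B = B * T"
    proof (rule mat_col_eqI)
      fix j assume "j < dim_col (B * T)" hence j: "j < m" using T by simp
      have colT: "col T j = y j" using y[of j] j by (auto simp: T_def intro!: eq_vecI)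
      have "col (\<sigma> g * B) j = \<sigma> g *\<^sub>v col B j" using sg B j by simp
      also have "\<dots> = \<sigma> g *\<^sub>v (B *\<^sub>v unit_vec m j)" using col_as_mult[OF B j] by simp
      also have "\<dots> = B *\<^sub>v y j" using y by simp
      also have "\<dots> = col (B * T) j" using B T j colT by simp
      finally show "col (\<sigma> g * B) j = col (B * T) j" .
    qed (use B T sg in auto)
    thus ?thesis using T by blast
  qed
  define \<tau> where "\<tau> g = (SOME T. T \<in> carrier_mat m m \<and> \<sigma> g * B = B * T)" for g
  have \<tau>: "\<tau> g \<in> carrier_mat m m \<and> \<sigma> g * B = B * \<tau> g" if "g \<in> carrier G" for g
    unfolding \<tau>_def by (rule someI_ex[OF ex[OF that]])
  have "representation G m \<tau>"
    unfolding representation_def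
  proof (intro conjI ballI)
    show "\<tau> g \<in> carrier_mat m m" if "g \<in> carrier G" for g using \<tau>[OF that] by simp
    have one: "\<one>\<^bsub>G\<^esub> \<in> carrier G" using monoid.one_closed[OF group.is_monoid[OF grp]] .
    have "B * \<tau> \<one>\<^bsub>G\<^esub> = B * 1\<^sub>m m"
    proof -
      have "B * \<tau> \<one>\<^bsub>G\<^esub> = \<sigma> \<one>\<^bsub>G\<^esub> * B" using \<tau>[OF one] by simp
      also have "\<dots> = B" using rep_one[OF rep] B by simp
      finally show ?thesis using B by simp
    qed
    thus "\<tau> \<one>\<^bsub>G\<^esub> = 1\<^sub>m m" using \<tau>[OF one] by (intro inj_mat_cancel[OF B inj _ one_carrier_mat]) auto
    fix g h assume g: "g \<in> carrier G" and h: "h \<in> carrier G"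
    have gh: "g \<otimes>\<^bsub>G\<^esub> h \<in> carrier G" using monoid.m_closed[OF group.is_monoid[OF grp] g h] .
    have sg: "\<sigma> g \<in> carrier_mat d d" "\<sigma> h \<in> carrier_mat d d"
      using rep_carrier[OF rep] g h by auto
    have tg: "\<tau> g \<in> carrier_mat m m" "\<tau> h \<in> carrier_mat m m" "\<tau> (g \<otimes>\<^bsub>G\<^esub> h) \<in> carrier_mat m m"
      using \<tau>[OF g] \<tau>[OF h] \<tau>[OF gh] by blast+
    have "B * \<tau> (g \<otimes>\<^bsub>G\<^esub> h) = \<sigma> (g \<otimes>\<^bsub>G\<^esub> h) * B" using \<tau>[OF gh] by simp
    also have "\<dots> = \<sigma> g * (\<sigma> h * B)" using rep_mult[OF rep g h] sg B by simp
    also have "\<dots> = \<sigma> g * (B * \<tau> h)" using \<tau>[OF h] by simp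
    also have "\<dots> = (\<sigma> g * B) * \<tau> h" using sg tg B by (simp add: assoc_mult_mat[of _ d d _ m _ m])
    also have "\<dots> = (B * \<tau> g) * \<tau> h" using \<tau>[OF g] by simp
    also have "\<dots> = B * (\<tau> g * \<tau> h)" using tg B by simp
    finally show "\<tau> (g \<otimes>\<^bsub>G\<^esub> h) = \<tau> g * \<tau> h"
      using tg by (intro inj_mat_cancel[OF B inj tg(3)]) auto
  qed
  thus ?thesis using \<tau> by blast
qed

lemma left_inverse:
  assumes B: "B \<in> carrier_mat d m" and inj: "inj_mat B"
  shows "\<exists>L \<in> carrier_mat m d. L * B = 1\<^sub>m m"
proof -
  define vs where "vs = cols B"
  have vsc: "set vs \<subseteq> carrier_vec d" using B by (auto simp: vs_def cols_def)
  have Bvs: "mat_of_cols d vs = B" using B mat_of_cols_cols[of B] by (auto simp: vs_def)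
  have W: "subsp d (carrier_vec d)" by (auto simp: subsp_def)
  obtain ws where ws: "set ws \<subseteq> carrier_vec d" "inj_mat (mat_of_cols d (vs @ ws))"
    "span_cols d (vs @ ws) = carrier_vec d"
    using extend_basis[OF W vsc] inj Bvs by auto
  define S where "S = mat_of_cols d (vs @ ws)"
  define m' where "m' = length (vs @ ws)"
  have S: "S \<in> carrier_mat d m'" unfolding S_def m'_def by (rule mat_of_cols_carrier)
  have le1: "m' \<le> d" using inj_le[OF S] ws(2) by (simp add: S_def)
  define x where "x i = (SOME x. x \<in> carrier_vec m' \<and> S *\<^sub>v x = unit_vec d i)" for i
  have x: "x i \<in> carrier_vec m' \<and> S *\<^sub>v x i = unit_vec d i" for i
  proof -
    have "unit_vec d i \<in> span_cols d (vs @ ws)" using ws(3) by simp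
    then obtain z where "z \<in> carrier_vec m'" "unit_vec d i = S *\<^sub>v z"
      unfolding span_cols_def S_def m'_def by auto
    thus ?thesis unfolding x_def by (intro someI_ex[of "\<lambda>x. x \<in> carrier_vec m' \<and> S *\<^sub>v x = unit_vec d i"]) auto
  qed
  define X where "X = mat m' d (\<lambda>(a,i). x i $ a)"
  have X: "X \<in> carrier_mat m' d" by (simp add: X_def)
  have SX: "S * X = 1\<^sub>m d"
  proof (rule mat_col_eqI)
    fix i assume "i < dim_col (1\<^sub>m d :: complex mat)" hence i: "i < d" by simp
    have colX: "col X i = x i" using x[of i] i by (auto simp: X_def intro!: eq_vecI)
    show "col (S * X) i = col (1\<^sub>m d) i" using S X i colX x[of i] by simp
  qed (use S X in auto)
  have "inj_mat X"
    unfolding inj_mat_def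
  proof (intro ballI impI)
    fix v assume v: "v \<in> carrier_vec (dim_col X)" and "X *\<^sub>v v = 0\<^sub>v (dim_row X)"
    hence v: "v \<in> carrier_vec d" and Xv: "X *\<^sub>v v = 0\<^sub>v m'" using X by auto
    have "v = (S * X) *\<^sub>v v" using SX v by simp
    also have "\<dots> = S *\<^sub>v (X *\<^sub>v v)" using S X v by simp
    also have "\<dots> = 0\<^sub>v d" using Xv S by simp
    finally show "v = 0\<^sub>v (dim_col X)" using X by simp
  qed
  hence "d \<le> m'" using inj_le[OF X] by simp
  with le1 have md: "m' = d" by simp
  obtain S' where S': "S' \<in> carrier_mat d d" "S' * S = 1\<^sub>m d"
    using square_inv[of S d] S md ws(2) by (auto simp: S_def)
  define L where "L = mat m d (\<lambda>(i,j). S' $$ (i,j))"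
  have mle: "m \<le> d" using inj_le[OF B inj] .
  have SB: "S $$ (l,j) = B $$ (l,j)" if "l < d" "j < m" for l j
  proof -
    have "length vs = m" using B by (simp add: vs_def)
    hence "S $$ (l,j) = vs ! j $ l" using that by (simp add: S_def mat_of_cols_index nth_append)
    also have "\<dots> = B $$ (l,j)" using that B by (simp add: vs_def)
    finally show ?thesis .
  qed
  have "L * B = 1\<^sub>m m"
  proof (rule eq_matI)
    fix i j assume "i < dim_row (1\<^sub>m m :: complex mat)" "j < dim_col (1\<^sub>m m :: complex mat)"
    hence i: "i < m" and j: "j < m" by auto
    have "(L * B) $$ (i,j) = (\<Sum>l<d. L $$ (i,l) * B $$ (l,j))"
      using B i j by (intro mult_mat_index_sum) (auto simp: L_def)
    also have "\<dots> = (\<Sum>l<d. S' $$ (i,l) * S $$ (l,j))"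
      using i j mle SB by (intro sum.cong) (auto simp: L_def)
    also have "\<dots> = (S' * S) $$ (i,j)"
      using S S' i j mle md by (intro mult_mat_index_sum[of S' d d S d, symmetric]) auto
    also have "\<dots> = 1\<^sub>m m $$ (i,j)" using S' i j mle by simp
    finally show "(L * B) $$ (i,j) = 1\<^sub>m m $$ (i,j)" .
  qed (use B in \<open>auto simp: L_def\<close>)
  moreover have "L \<in> carrier_mat m d" by (simp add: L_def)
  ultimately show ?thesis by blast
qed


lemma basis_subrep:
  assumes grp: "group G" and rep: "representation G d \<sigma>" and W: "subsp d W"
    and inv: "\<And>g v. g \<in> carrier G \<Longrightarrow> v \<in> W \<Longrightarrow> \<sigma> g *\<^sub>v v \<in> W"
  shows "\<exists>m B \<tau>. B \<in> carrier_mat d m \<and> inj_mat B \<and> {B *\<^sub>v x | x. x \<in> carrier_vec m} = W \<and>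
     representation G m \<tau> \<and> (\<forall>g\<in>carrier G. \<sigma> g * B = B * \<tau> g)"
proof -
  obtain vs where vs: "set vs \<subseteq> W" "inj_mat (mat_of_cols d vs)" "span_cols d vs = W"
    using basis_exists[OF W] by auto
  define B where "B = mat_of_cols d vs"
  define m where "m = length vs"
  have B: "B \<in> carrier_mat d m" by (simp add: B_def m_def)
  have img: "{B *\<^sub>v x | x. x \<in> carrier_vec m} = W" using vs(3) by (simp add: B_def m_def span_cols_def)
  have "\<exists>y\<in>carrier_vec m. \<sigma> g *\<^sub>v (B *\<^sub>v x) = B *\<^sub>v y" if g: "g \<in> carrier G" and x: "x \<in> carrier_vec m" for g x
  proof -
    have "B *\<^sub>v x \<in> W" using img x by blast
    hence "\<sigma> g *\<^sub>v (B *\<^sub>v x) \<in> W" using inv g by blast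
    thus ?thesis using img by blast
  qed
  from subrep[OF grp rep B _ this] vs(2) obtain \<tau> where
    "representation G m \<tau>" "\<forall>g\<in>carrier G. \<sigma> g * B = B * \<tau> g" by (auto simp: B_def)
  thus ?thesis using B img vs(2) by (auto simp: B_def)
qed

lemma vec0_mult: "(B :: complex mat) \<in> carrier_mat d 0 \<Longrightarrow> x \<in> carrier_vec 0 \<Longrightarrow> B *\<^sub>v x = 0\<^sub>v d"
  by (intro eq_vecI) (auto simp: scalar_prod_def)

lemma smult_zero_vec'[simp]: "(c::complex) \<cdot>\<^sub>v 0\<^sub>v n = 0\<^sub>v n"
  by (intro eq_vecI) auto

lemma massoc1:
  assumes "(A :: complex mat) \<in> carrier_mat a b" "B \<in> carrier_mat b c" "C \<in> carrier_mat c e" "D \<in> carrier_mat e f"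
  shows "A * B * C * D = A * B * (C * D)"
  using assms by (intro assoc_mult_mat[OF mult_carrier_mat[OF assms(1,2)] assms(3,4)])

lemma massoc2:
  assumes "(A :: complex mat) \<in> carrier_mat a b" "B \<in> carrier_mat b c" "C \<in> carrier_mat c e" "D \<in> carrier_mat e f"
  shows "A * B * (C * D) = A * (B * C) * D"
proof -
  have "A * B * (C * D) = A * (B * (C * D))" using assms by (intro assoc_mult_mat[of _ a b _ c _ f]) auto
  also have "B * (C * D) = B * C * D" using assms by (intro assoc_mult_mat[symmetric])
  also have "A * (B * C * D) = A * (B * C) * D" using assms by (intro assoc_mult_mat[of _ a b _ e _ f, symmetric]) auto
  finally show ?thesis .
qed

lemma massoc3:
  assumes "(A :: complex mat) \<in> carrier_mat a b" "B \<in> carrier_mat b c" "C \<in> carrier_mat c e" "D \<in> carrier_mat e f"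
  shows "A * B * C * D = A * (B * C * D)"
proof -
  have "A * B * C * D = A * (B * C) * D" using assms by (simp add: assoc_mult_mat[OF assms(1,2,3)])
  also have "\<dots> = A * (B * C * D)" using assms by (intro assoc_mult_mat[of _ a b _ e _ f]) auto
  finally show ?thesis .
qed

lemma split_rep:
  assumes grp: "group G" and fin: "finite (carrier G)" and rep: "representation G d \<sigma>"
    and W: "invariant_subspace G d \<sigma> W" and W0: "W \<noteq> {0\<^sub>v d}" and Wd: "W \<noteq> carrier_vec d"
  shows "\<exists>m1 B1 \<tau>1 m2 B2 \<tau>2. m1 < d \<and> m2 < d \<and> B1 \<in> carrier_mat d m1 \<and> B2 \<in> carrier_mat d m2 \<and>
    representation G m1 \<tau>1 \<and> representation G m2 \<tau>2 \<and>
    (\<forall>g\<in>carrier G. \<sigma> g * B1 = B1 * \<tau>1 g) \<and> (\<forall>g\<in>carrier G. \<sigma> g * B2 = B2 * \<tau>2 g) \<and>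
    (\<forall>v\<in>carrier_vec d. \<exists>x\<in>carrier_vec m1. \<exists>y\<in>carrier_vec m2. v = B1 *\<^sub>v x + B2 *\<^sub>v y)"
proof -
  interpret group G by fact
  have Ws: "subsp d W" using W by (auto simp: invariant_subspace_def subsp_def)
  obtain m1 B1 \<tau>1 where B1: "B1 \<in> carrier_mat d m1" "inj_mat B1" "{B1 *\<^sub>v x | x. x \<in> carrier_vec m1} = W"
    and \<tau>1: "representation G m1 \<tau>1" "\<forall>g\<in>carrier G. \<sigma> g * B1 = B1 * \<tau>1 g"
  proof -
    have inv: "\<And>g v. g \<in> carrier G \<Longrightarrow> v \<in> W \<Longrightarrow> \<sigma> g *\<^sub>v v \<in> W"
      using W by (simp add: invariant_subspace_def)
    from basis_subrep[OF grp rep Ws inv] show ?thesis using that by blast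
  qed
  have m1d: "m1 < d"
  proof -
    have "m1 \<le> d" using inj_le[OF B1(1,2)] .
    moreover have "m1 \<noteq> d"
    proof
      assume md: "m1 = d"
      have B1': "B1 \<in> carrier_mat d d" using B1(1) md by simp
      have "y \<in> W" if y: "y \<in> carrier_vec d" for y
      proof -
        obtain x where "x \<in> carrier_vec d" "B1 *\<^sub>v x = y" using square_surj[OF B1' B1(2) y] by blast
        hence "y \<in> {B1 *\<^sub>v x | x. x \<in> carrier_vec m1}" using md by blast
        thus ?thesis using B1(3) by simp
      qed
      hence "carrier_vec d \<subseteq> W" by (rule subsetI)
      moreover have "W \<subseteq> carrier_vec d" using Ws by (simp add: subsp_def)
      ultimately have "W = carrier_vec d" by (rule equalityI[rotated])
      thus False using Wd by simp
    qed
    ultimately show ?thesis by simp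
  qed
  have m1pos: "0 < m1"
  proof (rule ccontr)
    assume "\<not> 0 < m1"
    hence "m1 = 0" by simp
    have "w \<in> {0\<^sub>v d}" if w: "w \<in> W" for w
    proof -
      from w B1(3) obtain x where "x \<in> carrier_vec m1" "w = B1 *\<^sub>v x" by blast
      thus ?thesis using vec0_mult[of B1 d x] B1(1) \<open>m1 = 0\<close> by simp
    qed
    hence "W \<subseteq> {0\<^sub>v d}" by blast
    moreover have "0\<^sub>v d \<in> W" using Ws by (simp add: subsp_def)
    ultimately show False using W0 by blast
  qed
  obtain L where L: "L \<in> carrier_mat m1 d" "L * B1 = 1\<^sub>m m1" using left_inverse[OF B1(1,2)] by blast
  define n where "n = card (carrier G)"
  have npos: "n > 0" using fin by (auto simp: n_def card_gt_0_iff)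
  have sc: "\<sigma> g \<in> carrier_mat d d" if "g \<in> carrier G" for g using rep_carrier[OF rep that] .
  have tc: "\<tau>1 g \<in> carrier_mat m1 m1" if "g \<in> carrier G" for g using rep_carrier[OF \<tau>1(1) that] .
  have [simp]: "L * \<sigma> h \<in> carrier_mat m1 d" "\<tau>1 h * L \<in> carrier_mat m1 d"
     "\<sigma> h * B1 \<in> carrier_mat d m1" "B1 * \<tau>1 h \<in> carrier_mat d m1"
     "\<tau>1 h * \<tau>1 h' \<in> carrier_mat m1 m1" "\<sigma> h * \<sigma> h' \<in> carrier_mat d d"
     "\<sigma> h \<in> carrier_mat d d" "\<tau>1 h \<in> carrier_mat m1 m1"
    if "h \<in> carrier G" "h' \<in> carrier G" for h h'
    using sc[OF that(1)] tc[OF that(1)] sc[OF that(2)] tc[OF that(2)] L B1 by auto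
  define Q where "Q = msum m1 d (carrier G) (\<lambda>h. \<tau>1 h * L * \<sigma> (inv\<^bsub>G\<^esub> h))"
  have Qc: "Q \<in> carrier_mat m1 d" by (simp add: Q_def)
  have fc: "\<tau>1 h * L * \<sigma> (inv\<^bsub>G\<^esub> h) \<in> carrier_mat m1 d" if "h \<in> carrier G" for h
    by (rule mult_carrier_mat[OF mult_carrier_mat[OF tc[OF that] L(1)] sc[OF inv_closed[OF that]]])
  have QB: "Q * B1 = of_nat n \<cdot>\<^sub>m 1\<^sub>m m1"
  proof -
    have "Q * B1 = msum m1 m1 (carrier G) (\<lambda>h. \<tau>1 h * L * \<sigma> (inv\<^bsub>G\<^esub> h) * B1)"
      unfolding Q_def by (rule msum_mult_right[OF fc B1(1)])
    also have "\<dots> = msum m1 m1 (carrier G) (\<lambda>h. 1\<^sub>m m1)"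
    proof (rule msum_cong)
      fix h assume h: "h \<in> carrier G"
      have ih: "inv\<^bsub>G\<^esub> h \<in> carrier G" using h by simp
      have "\<tau>1 h * L * \<sigma> (inv\<^bsub>G\<^esub> h) * B1 = \<tau>1 h * L * (\<sigma> (inv\<^bsub>G\<^esub> h) * B1)"
        by (rule massoc1[OF tc[OF h] L(1) sc[OF ih] B1(1)])
      also have "\<dots> = \<tau>1 h * L * (B1 * \<tau>1 (inv\<^bsub>G\<^esub> h))" using \<tau>1(2) ih by simp
      also have "\<dots> = \<tau>1 h * (L * B1) * \<tau>1 (inv\<^bsub>G\<^esub> h)"
        by (rule massoc2[OF tc[OF h] L(1) B1(1) tc[OF ih]])
      also have "\<dots> = \<tau>1 (h \<otimes>\<^bsub>G\<^esub> inv\<^bsub>G\<^esub> h)" using L tc[OF h] tc[OF ih] rep_mult[OF \<tau>1(1) h ih] by simp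
      also have "\<dots> = 1\<^sub>m m1" using h rep_one[OF \<tau>1(1)] by simp
      finally show "\<tau>1 h * L * \<sigma> (inv\<^bsub>G\<^esub> h) * B1 = 1\<^sub>m m1" .
    qed
    also have "\<dots> = of_nat n \<cdot>\<^sub>m 1\<^sub>m m1" using msum_const_one[OF fin] by (simp add: n_def)
    finally show ?thesis .
  qed
  have Qs: "Q * \<sigma> g = \<tau>1 g * Q" if g: "g \<in> carrier G" for g
  proof -
    define F where "F h = \<tau>1 h * L * \<sigma> (inv\<^bsub>G\<^esub> h \<otimes>\<^bsub>G\<^esub> g)" for h
    have "Q * \<sigma> g = msum m1 d (carrier G) (\<lambda>h. \<tau>1 h * L * \<sigma> (inv\<^bsub>G\<^esub> h) * \<sigma> g)"
      unfolding Q_def by (rule msum_mult_right[OF fc sc[OF g]])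
    also have "\<dots> = msum m1 d (carrier G) F"
    proof (rule msum_cong)
      fix h assume h: "h \<in> carrier G"
      have ih: "inv\<^bsub>G\<^esub> h \<in> carrier G" using h by simp
      show "\<tau>1 h * L * \<sigma> (inv\<^bsub>G\<^esub> h) * \<sigma> g = F h"
        unfolding F_def using massoc1[OF tc[OF h] L(1) sc[OF ih] sc[OF g]] rep_mult[OF rep ih g] by simp
    qed
    also have "\<dots> = msum m1 d (carrier G) (\<lambda>h. F (g \<otimes>\<^bsub>G\<^esub> h))"
      by (rule msum_reindex[symmetric, OF group_bij_left[OF grp g]])
    also have "\<dots> = msum m1 d (carrier G) (\<lambda>h. \<tau>1 g * (\<tau>1 h * L * \<sigma> (inv\<^bsub>G\<^esub> h)))"
    proof (rule msum_cong)
      fix h assume h: "h \<in> carrier G"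
      have ih: "inv\<^bsub>G\<^esub> h \<in> carrier G" using h by simp
      have "inv\<^bsub>G\<^esub> (g \<otimes>\<^bsub>G\<^esub> h) \<otimes>\<^bsub>G\<^esub> g = inv\<^bsub>G\<^esub> h" using g h by (simp add: inv_mult_group m_assoc)
      hence "F (g \<otimes>\<^bsub>G\<^esub> h) = \<tau>1 (g \<otimes>\<^bsub>G\<^esub> h) * L * \<sigma> (inv\<^bsub>G\<^esub> h)" by (simp add: F_def)
      also have "\<dots> = \<tau>1 g * (\<tau>1 h * L * \<sigma> (inv\<^bsub>G\<^esub> h))"
        using rep_mult[OF \<tau>1(1) g h] massoc3[OF tc[OF g] tc[OF h] L(1) sc[OF ih]] by simp
      finally show "F (g \<otimes>\<^bsub>G\<^esub> h) = \<tau>1 g * (\<tau>1 h * L * \<sigma> (inv\<^bsub>G\<^esub> h))" .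
    qed
    also have "\<dots> = \<tau>1 g * Q"
      unfolding Q_def by (rule msum_mult_left[OF fc tc[OF g], symmetric])
    finally show ?thesis .
  qed
  define W' where "W' = {v \<in> carrier_vec d. Q *\<^sub>v v = 0\<^sub>v m1}"
  have W's: "subsp d W'"
    unfolding subsp_def W'_def
  proof (intro conjI ballI allI)
    show "0\<^sub>v d \<in> {v \<in> carrier_vec d. Q *\<^sub>v v = 0\<^sub>v m1}" using Qc by simp
    fix v assume v: "v \<in> {v \<in> carrier_vec d. Q *\<^sub>v v = 0\<^sub>v m1}"
    { fix w assume w: "w \<in> {v \<in> carrier_vec d. Q *\<^sub>v v = 0\<^sub>v m1}"
      show "v + w \<in> {v \<in> carrier_vec d. Q *\<^sub>v v = 0\<^sub>v m1}"
        using v w Qc by (simp add: mult_add_distrib_mat_vec[OF Qc]) }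
    fix c :: complex
    show "c \<cdot>\<^sub>v v \<in> {v \<in> carrier_vec d. Q *\<^sub>v v = 0\<^sub>v m1}"
      using v Qc by (simp add: mult_mat_vec[OF Qc])
  qed auto
  have W'inv: "\<sigma> g *\<^sub>v v \<in> W'" if g: "g \<in> carrier G" and v: "v \<in> W'" for g v
  proof -
    have vc: "v \<in> carrier_vec d" and Qv: "Q *\<^sub>v v = 0\<^sub>v m1" using v by (auto simp: W'_def)
    have "Q *\<^sub>v (\<sigma> g *\<^sub>v v) = (Q * \<sigma> g) *\<^sub>v v" using Qc sc[OF g] vc by simp
    also have "\<dots> = (\<tau>1 g * Q) *\<^sub>v v" using Qs[OF g] by simp
    also have "\<dots> = \<tau>1 g *\<^sub>v (Q *\<^sub>v v)" using Qc tc[OF g] vc by simp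
    also have "\<dots> = 0\<^sub>v m1" using Qv tc[OF g] by simp
    finally show ?thesis using sc[OF g] vc by (simp add: W'_def)
  qed
  obtain m2 B2 \<tau>2 where B2: "B2 \<in> carrier_mat d m2" "inj_mat B2" "{B2 *\<^sub>v x | x. x \<in> carrier_vec m2} = W'"
    and \<tau>2: "representation G m2 \<tau>2" "\<forall>g\<in>carrier G. \<sigma> g * B2 = B2 * \<tau>2 g"
    using basis_subrep[OF grp rep W's W'inv] by blast
  have m2d: "m2 < d"
  proof -
    have "m2 \<le> d" using inj_le[OF B2(1,2)] .
    moreover have "m2 \<noteq> d"
    proof
      assume "m2 = d"
      have B2': "B2 \<in> carrier_mat d d" using B2(1) \<open>m2 = d\<close> by simp
      have sub: "carrier_vec d \<subseteq> W'"
      proof (rule subsetI)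
        fix y :: "complex vec" assume y: "y \<in> carrier_vec d"
        obtain x where "x \<in> carrier_vec d" "B2 *\<^sub>v x = y" using square_surj[OF B2' B2(2) y] by blast
        hence "y \<in> {B2 *\<^sub>v x | x. x \<in> carrier_vec m2}" using \<open>m2 = d\<close> by blast
        thus "y \<in> W'" using B2(3) by simp
      qed
      define b where "b = B1 *\<^sub>v unit_vec m1 0"
      have bc: "b \<in> carrier_vec d" using B1 by (simp add: b_def)
      have "Q *\<^sub>v b = (Q * B1) *\<^sub>v unit_vec m1 0" using Qc B1 by (simp add: b_def)
      also have "\<dots> = of_nat n \<cdot>\<^sub>v unit_vec m1 0" using QB by (simp add: smult_mat_mult_vec[of _ m1 m1])
      finally have "(Q *\<^sub>v b) $ 0 = of_nat n" using m1pos by simp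
      moreover have "Q *\<^sub>v b = 0\<^sub>v m1" using sub bc by (auto simp: W'_def)
      ultimately show False using npos m1pos by simp
    qed
    ultimately show ?thesis by simp
  qed
  have dec: "\<exists>x\<in>carrier_vec m1. \<exists>y\<in>carrier_vec m2. v = B1 *\<^sub>v x + B2 *\<^sub>v y" if v: "v \<in> carrier_vec d" for v
  proof -
    define x where "x = (1 / of_nat n) \<cdot>\<^sub>v (Q *\<^sub>v v)"
    have xc: "x \<in> carrier_vec m1" using Qc v by (simp add: x_def)
    define u where "u = v - B1 *\<^sub>v x"
    have uc: "u \<in> carrier_vec d" using v B1(1) xc by (simp add: u_def)
    have "Q *\<^sub>v u = Q *\<^sub>v v - Q *\<^sub>v (B1 *\<^sub>v x)"
      unfolding u_def using Qc v B1 xc by (intro mult_minus_distrib_mat_vec) auto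
    also have "Q *\<^sub>v (B1 *\<^sub>v x) = (Q * B1) *\<^sub>v x" using Qc B1 xc by simp
    also have "\<dots> = of_nat n \<cdot>\<^sub>v x" using QB xc by (simp add: smult_mat_mult_vec[of _ m1 m1])
    also have "\<dots> = Q *\<^sub>v v" using npos Qc v by (simp add: x_def smult_smult_assoc)
    finally have "Q *\<^sub>v u = 0\<^sub>v m1" using Qc v by simp
    hence "u \<in> W'" using uc by (simp add: W'_def)
    then obtain y where y: "y \<in> carrier_vec m2" "u = B2 *\<^sub>v y" using B2(3) by blast
    have "v = B1 *\<^sub>v x + u" using v B1 xc by (auto simp: u_def intro!: eq_vecI)
    thus ?thesis using xc y by blast
  qed
  show ?thesis
    apply (rule exI[of _ m1], rule exI[of _ B1], rule exI[of _ \<tau>1])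
    apply (rule exI[of _ m2], rule exI[of _ B2], rule exI[of _ \<tau>2])
    apply (intro conjI ballI)
    using m1d m2d B1(1) B2(1) \<tau>1 \<tau>2 dec by simp_all
qed


definition valid :: "('a, 'b) monoid_scheme \<Rightarrow> ('a \<times> real) list \<Rightarrow> bool" where
  "valid G xs \<longleftrightarrow> (\<forall>(g, p) \<in> set xs. g \<in> carrier G \<and> 0 \<le> p \<and> p \<le> 1)"

lemma valid_rep_carrier: "valid G xs \<Longrightarrow> representation G d \<sigma> \<Longrightarrow> (g,p) \<in> set xs \<Longrightarrow> \<sigma> g \<in> carrier_mat d d"
  unfolding valid_def using rep_carrier by fastforce

lemma zero_mat_mult_vec: "v \<in> carrier_vec c \<Longrightarrow> (0\<^sub>m r c :: complex mat) *\<^sub>v v = 0\<^sub>v r"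
  by (intro eq_vecI) (auto simp: scalar_prod_def)

lemma fixvec:
  assumes B: "B \<in> carrier_mat d m" and s: "\<sigma> g \<in> carrier_mat d d" and t: "\<tau> g \<in> carrier_mat m m"
    and i: "\<sigma> g * B = B * \<tau> g" and w: "w \<in> carrier_vec m" and f: "\<tau> g *\<^sub>v w = w"
  shows "\<sigma> g *\<^sub>v (B *\<^sub>v w) = B *\<^sub>v w"
proof -
  have "\<sigma> g *\<^sub>v (B *\<^sub>v w) = (\<sigma> g * B) *\<^sub>v w" using B s w by simp
  also have "\<dots> = B *\<^sub>v (\<tau> g *\<^sub>v w)" using i B t w by simp
  finally show ?thesis using f by simp
qed

lemma PT_mult_B:
  assumes B: "B \<in> carrier_mat d m" and rs: "representation G d \<sigma>" and rt: "representation G m \<tau>"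
    and i: "\<forall>g\<in>carrier G. \<sigma> g * B = B * \<tau> g" and xs: "valid G xs" and x: "x \<in> carrier_vec m"
  shows "PT d \<sigma> xs *\<^sub>v (B *\<^sub>v x) = B *\<^sub>v (PT m \<tau> xs *\<^sub>v x)"
proof -
  have int: "PT d \<sigma> xs * B = B * PT m \<tau> xs"
    by (rule PT_intertwine[OF B]) (use xs i rs rt in \<open>auto simp: valid_def intro: rep_carrier\<close>)
  have c1: "PT d \<sigma> xs \<in> carrier_mat d d" by (rule PT_carrier) (use xs rs in \<open>auto intro: valid_rep_carrier\<close>)
  have c2: "PT m \<tau> xs \<in> carrier_mat m m" by (rule PT_carrier) (use xs rt in \<open>auto intro: valid_rep_carrier\<close>)
  have "PT d \<sigma> xs *\<^sub>v (B *\<^sub>v x) = (PT d \<sigma> xs * B) *\<^sub>v x" using c1 B x by simp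
  also have "\<dots> = B *\<^sub>v (PT m \<tau> xs *\<^sub>v x)" using int B c2 x by simp
  finally show ?thesis .
qed

lemma claim:
  assumes grp: "group G" and fin: "finite (carrier G)"
    and H: "\<forall>(d::nat) (\<rho>::'a \<Rightarrow> complex mat). irreducible_rep G d \<rho> \<and> \<not> trivial_rep G d \<rho> \<longrightarrow> mixable_rep G d \<rho>"
  shows "representation G d \<sigma> \<Longrightarrow> \<exists>xs. valid G xs \<and>
     (\<forall>g\<in>carrier G. \<forall>v\<in>carrier_vec d. \<sigma> g *\<^sub>v (PT d \<sigma> xs *\<^sub>v v) = PT d \<sigma> xs *\<^sub>v v)"
proof (induction d arbitrary: \<sigma> rule: less_induct)
  case (less d)
  note rep = less.prems
  show ?case
  proof (cases "irreducible_rep G d \<sigma>")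
    case True
    show ?thesis
    proof (cases "trivial_rep G d \<sigma>")
      case True
      thus ?thesis by (intro exI[of _ "[]"]) (auto simp: valid_def trivial_rep_def)
    next
      case False
      with H \<open>irreducible_rep G d \<sigma>\<close> have "mixable_rep G d \<sigma>" by blast
      then obtain xs where xs: "valid G xs" "PT d \<sigma> xs = 0\<^sub>m d d"
        unfolding mixable_rep_def valid_def PT_def by blast
      show ?thesis
        by (rule exI[of _ xs]) (use xs rep in \<open>auto dest: rep_carrier simp: zero_mat_mult_vec\<close>)
    qed
  next
    case False
    show ?thesis
    proof (cases "d = 0")
      case True
      show ?thesis
      proof (rule exI[of _ "[]"], intro conjI ballI)
        show "valid G []" by (simp add: valid_def)
        fix g and v :: "complex vec" assume g: "g \<in> carrier G" and v: "v \<in> carrier_vec d"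
        show "\<sigma> g *\<^sub>v (PT d \<sigma> [] *\<^sub>v v) = PT d \<sigma> [] *\<^sub>v v"
          using rep_carrier[OF rep g] v True by (auto intro!: eq_vecI)
      qed
    next
      case d0: False
      from False d0 rep obtain W where W: "invariant_subspace G d \<sigma> W" "W \<noteq> {0\<^sub>v d}" "W \<noteq> carrier_vec d"
        unfolding irreducible_rep_def by auto
      from split_rep[OF grp fin rep W] obtain m1 B1 \<tau>1 m2 B2 \<tau>2 where
        sp: "m1 < d" "m2 < d" "B1 \<in> carrier_mat d m1" "B2 \<in> carrier_mat d m2"
          "representation G m1 \<tau>1" "representation G m2 \<tau>2"
          "\<forall>g\<in>carrier G. \<sigma> g * B1 = B1 * \<tau>1 g" "\<forall>g\<in>carrier G. \<sigma> g * B2 = B2 * \<tau>2 g"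
          "\<forall>v\<in>carrier_vec d. \<exists>x\<in>carrier_vec m1. \<exists>y\<in>carrier_vec m2. v = B1 *\<^sub>v x + B2 *\<^sub>v y"
        by blast
      obtain xs1 where xs1: "valid G xs1"
        "\<forall>g\<in>carrier G. \<forall>v\<in>carrier_vec m1. \<tau>1 g *\<^sub>v (PT m1 \<tau>1 xs1 *\<^sub>v v) = PT m1 \<tau>1 xs1 *\<^sub>v v"
        using less.IH[OF sp(1) sp(5)] by blast
      obtain xs2 where xs2: "valid G xs2"
        "\<forall>g\<in>carrier G. \<forall>v\<in>carrier_vec m2. \<tau>2 g *\<^sub>v (PT m2 \<tau>2 xs2 *\<^sub>v v) = PT m2 \<tau>2 xs2 *\<^sub>v v"
        using less.IH[OF sp(2) sp(6)] by blast
      define xs where "xs = xs1 @ xs2"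
      have vxs: "valid G xs" using xs1(1) xs2(1) by (auto simp: valid_def xs_def)
      have T1c: "PT d \<sigma> xs1 \<in> carrier_mat d d" by (rule PT_carrier) (use xs1 rep in \<open>auto intro: valid_rep_carrier\<close>)
      have T2c: "PT d \<sigma> xs2 \<in> carrier_mat d d" by (rule PT_carrier) (use xs2 rep in \<open>auto intro: valid_rep_carrier\<close>)
      have Txs: "PT d \<sigma> xs = PT d \<sigma> xs1 * PT d \<sigma> xs2"
        unfolding xs_def by (rule PT_append) (use vxs rep in \<open>auto simp: xs_def intro: valid_rep_carrier\<close>)
      show ?thesis
      proof (rule exI[of _ xs], intro conjI ballI)
        show "valid G xs" by fact
        fix g and v :: "complex vec" assume g: "g \<in> carrier G" and v: "v \<in> carrier_vec d"
        obtain x y where x: "x \<in> carrier_vec m1" and y: "y \<in> carrier_vec m2" and vxy: "v = B1 *\<^sub>v x + B2 *\<^sub>v y"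
          using sp(9) v by blast
        define w1 where "w1 = PT m1 \<tau>1 xs1 *\<^sub>v (PT m1 \<tau>1 xs2 *\<^sub>v x)"
        define f where "f = PT m2 \<tau>2 xs2 *\<^sub>v y"
        have P1: "PT m1 \<tau>1 xs2 \<in> carrier_mat m1 m1"
          by (rule PT_carrier) (use xs2(1) sp(5) in \<open>auto intro: valid_rep_carrier\<close>)
        have P2: "PT m1 \<tau>1 xs1 \<in> carrier_mat m1 m1"
          by (rule PT_carrier) (use xs1(1) sp(5) in \<open>auto intro: valid_rep_carrier\<close>)
        have P3: "PT m2 \<tau>2 xs2 \<in> carrier_mat m2 m2"
          by (rule PT_carrier) (use xs2(1) sp(6) in \<open>auto intro: valid_rep_carrier\<close>)
        have c_t2x: "PT m1 \<tau>1 xs2 *\<^sub>v x \<in> carrier_vec m1" using P1 x by simp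
        have w1c: "w1 \<in> carrier_vec m1" using P2 c_t2x by (simp add: w1_def)
        have fc: "f \<in> carrier_vec m2" using P3 y by (simp add: f_def)
        have w1fix: "\<tau>1 h *\<^sub>v w1 = w1" if "h \<in> carrier G" for h
          using xs1(2) that c_t2x by (simp add: w1_def)
        have ffix: "\<tau>2 h *\<^sub>v f = f" if "h \<in> carrier G" for h
          using xs2(2) that y by (simp add: f_def)
        have B2f_fix: "\<sigma> h *\<^sub>v (B2 *\<^sub>v f) = B2 *\<^sub>v f" if "h \<in> carrier G" for h
          by (rule fixvec[where \<sigma>=\<sigma> and \<tau>=\<tau>2 and g=h, OF sp(4) rep_carrier[OF rep that] rep_carrier[OF sp(6) that]])
             (use sp(8) that fc ffix in auto)
        have B1w_fix: "\<sigma> h *\<^sub>v (B1 *\<^sub>v w1) = B1 *\<^sub>v w1" if "h \<in> carrier G" for h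
          by (rule fixvec[where \<sigma>=\<sigma> and \<tau>=\<tau>1 and g=h, OF sp(3) rep_carrier[OF rep that] rep_carrier[OF sp(5) that]])
             (use sp(7) that w1c w1fix in auto)
        have e1: "PT d \<sigma> xs2 *\<^sub>v (B1 *\<^sub>v x) = B1 *\<^sub>v (PT m1 \<tau>1 xs2 *\<^sub>v x)"
          by (rule PT_mult_B[OF sp(3) rep sp(5) sp(7) xs2(1) x])
        have e2: "PT d \<sigma> xs1 *\<^sub>v (B1 *\<^sub>v (PT m1 \<tau>1 xs2 *\<^sub>v x)) = B1 *\<^sub>v w1"
          unfolding w1_def by (rule PT_mult_B[OF sp(3) rep sp(5) sp(7) xs1(1) c_t2x])
        have e3: "PT d \<sigma> xs2 *\<^sub>v (B2 *\<^sub>v y) = B2 *\<^sub>v f"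
          unfolding f_def by (rule PT_mult_B[OF sp(4) rep sp(6) sp(8) xs2(1) y])
        have e4: "PT d \<sigma> xs1 *\<^sub>v (B2 *\<^sub>v f) = B2 *\<^sub>v f"
          by (rule PT_fixed) (use B2f_fix xs1(1) rep sp(4) fc in \<open>auto simp: valid_def intro: rep_carrier\<close>)
        have "PT d \<sigma> xs *\<^sub>v v = PT d \<sigma> xs1 *\<^sub>v (PT d \<sigma> xs2 *\<^sub>v v)" using Txs T1c T2c v by simp
        also have "PT d \<sigma> xs2 *\<^sub>v v = PT d \<sigma> xs2 *\<^sub>v (B1 *\<^sub>v x) + PT d \<sigma> xs2 *\<^sub>v (B2 *\<^sub>v y)"
          unfolding vxy using T2c sp(3,4) x y by (intro mult_add_distrib_mat_vec) auto
        also have "PT d \<sigma> xs1 *\<^sub>v \<dots> = B1 *\<^sub>v w1 + B2 *\<^sub>v f"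
          unfolding e1 e3 using T1c sp(3,4) c_t2x fc e2 e4 by (simp add: mult_add_distrib_mat_vec[OF T1c])
        finally have Tv: "PT d \<sigma> xs *\<^sub>v v = B1 *\<^sub>v w1 + B2 *\<^sub>v f" .
        have "\<sigma> g *\<^sub>v (B1 *\<^sub>v w1 + B2 *\<^sub>v f) = \<sigma> g *\<^sub>v (B1 *\<^sub>v w1) + \<sigma> g *\<^sub>v (B2 *\<^sub>v f)"
          using rep_carrier[OF rep g] sp(3,4) w1c fc by (intro mult_add_distrib_mat_vec) auto
        also have "\<dots> = B1 *\<^sub>v w1 + B2 *\<^sub>v f" using B1w_fix[OF g] B2f_fix[OF g] by simp
        finally show "\<sigma> g *\<^sub>v (PT d \<sigma> xs *\<^sub>v v) = PT d \<sigma> xs *\<^sub>v v" using Tv by simp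
      qed
    qed
  qed
qed


lemma set_mix:
  assumes grp: "group G" and xs: "valid G xs"
  shows "set_pmf (mix_pmf G xs) \<subseteq> carrier G"
  using xs
proof (induction xs)
  case Nil thus ?case using monoid.one_closed[OF group.is_monoid[OF grp]] by simp
next
  case (Cons a xs)
  obtain g p where a: "a = (g,p)" by force
  have g: "g \<in> carrier G" and IH: "set_pmf (mix_pmf G xs) \<subseteq> carrier G"
    using Cons a by (auto simp: valid_def)
  show ?case using a IH g monoid.m_closed[OF group.is_monoid[OF grp] g]
    by (auto split: if_splits)
qed

lemma pmf_step:
  assumes grp: "group G" and fin: "finite (carrier G)" and p: "0 \<le> p" "p \<le> 1"
    and sub: "set_pmf (mix_pmf G xs) \<subseteq> carrier G"
  shows "pmf (mix_pmf G ((g,p) # xs)) z =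
    p * (\<Sum>y\<in>carrier G. indicator {z} (g \<otimes>\<^bsub>G\<^esub> y) * pmf (mix_pmf G xs) y) + (1 - p) * pmf (mix_pmf G xs) z"
proof -
  let ?\<mu> = "mix_pmf G xs"
  have T: "pmf (bind_pmf ?\<mu> (\<lambda>y. return_pmf (g \<otimes>\<^bsub>G\<^esub> y))) z =
      (\<Sum>y\<in>carrier G. indicator {z} (g \<otimes>\<^bsub>G\<^esub> y) * pmf ?\<mu> y)"
    unfolding pmf_bind pmf_return
    by (rule integral_measure_pmf_real) (use fin sub in auto)
  have F: "pmf (bind_pmf ?\<mu> (\<lambda>y. return_pmf y)) z = pmf ?\<mu> z"
    by (simp add: bind_return_pmf')
  have "pmf (mix_pmf G ((g,p) # xs)) z =
     pmf (bind_pmf ?\<mu> (\<lambda>y. return_pmf (g \<otimes>\<^bsub>G\<^esub> y))) z * p + pmf (bind_pmf ?\<mu> (\<lambda>y. return_pmf y)) z * (1 - p)"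
    using p by (simp add: pmf_bind[of "bernoulli_pmf p"])
  thus ?thesis using T F by (simp add: ac_simps)
qed

lemma msum_index: "i < r \<Longrightarrow> j < c \<Longrightarrow> msum r c A f $$ (i,j) = (\<Sum>x\<in>A. f x $$ (i,j))"
  by (simp add: msum_def)

lemma product_formula:
  assumes grp: "group G" and fin: "finite (carrier G)" and rep: "representation G d \<rho>" and xs: "valid G xs"
  shows "PT d \<rho> xs = msum d d (carrier G) (\<lambda>x. complex_of_real (pmf (mix_pmf G xs) x) \<cdot>\<^sub>m \<rho> x)"
  using xs
proof (induction xs)
  have dims: "dim_row (\<rho> x) = d" "dim_col (\<rho> x) = d" if "x \<in> carrier G" for x
    using rep_carrier[OF rep that] by auto
  case Nil
  have one: "\<one>\<^bsub>G\<^esub> \<in> carrier G" using monoid.one_closed[OF group.is_monoid[OF grp]] .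
  show ?case
  proof (rule eq_matI)
    fix i j assume "i < dim_row (msum d d (carrier G) (\<lambda>x. complex_of_real (pmf (mix_pmf G []) x) \<cdot>\<^sub>m \<rho> x))"
      "j < dim_col (msum d d (carrier G) (\<lambda>x. complex_of_real (pmf (mix_pmf G []) x) \<cdot>\<^sub>m \<rho> x))"
    hence i: "i < d" and j: "j < d" by auto
    have "msum d d (carrier G) (\<lambda>x. complex_of_real (pmf (mix_pmf G []) x) \<cdot>\<^sub>m \<rho> x) $$ (i,j)
       = (\<Sum>x\<in>carrier G. (if x = \<one>\<^bsub>G\<^esub> then \<rho> x $$ (i,j) else 0))"
      using i j by (intro trans[OF msum_index[OF i j]] sum.cong) (auto simp: indicator_def dims)
    also have "\<dots> = \<rho> \<one>\<^bsub>G\<^esub> $$ (i,j)" using fin one by (simp add: sum.delta)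
    also have "\<dots> = 1\<^sub>m d $$ (i,j)" using rep_one[OF rep] by simp
    finally show "PT d \<rho> [] $$ (i,j) = msum d d (carrier G) (\<lambda>x. complex_of_real (pmf (mix_pmf G []) x) \<cdot>\<^sub>m \<rho> x) $$ (i,j)"
      by simp
  qed auto
next
  have dims: "dim_row (\<rho> x) = d" "dim_col (\<rho> x) = d" if "x \<in> carrier G" for x
    using rep_carrier[OF rep that] by auto
  case (Cons a xs)
  obtain g p where a: "a = (g,p)" by force
  have g: "g \<in> carrier G" and p: "0 \<le> p" "p \<le> 1" and vxs: "valid G xs"
    using Cons.prems a by (auto simp: valid_def)
  note IH = Cons.IH[OF vxs]
  let ?\<mu> = "mix_pmf G xs"
  let ?\<nu> = "mix_pmf G ((g,p) # xs)"
  have sub: "set_pmf ?\<mu> \<subseteq> carrier G" by (rule set_mix[OF grp vxs])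
  have rg: "\<rho> g \<in> carrier_mat d d" using rep_carrier[OF rep g] .
  have gx: "g \<otimes>\<^bsub>G\<^esub> x \<in> carrier G" if "x \<in> carrier G" for x
    using monoid.m_closed[OF group.is_monoid[OF grp] g that] .
  define M where "M = msum d d (carrier G) (\<lambda>x. complex_of_real (pmf ?\<mu> x) \<cdot>\<^sub>m \<rho> x)"
  have Mc: "M \<in> carrier_mat d d" by (simp add: M_def)
  have gM: "\<rho> g * M = msum d d (carrier G) (\<lambda>x. complex_of_real (pmf ?\<mu> x) \<cdot>\<^sub>m \<rho> (g \<otimes>\<^bsub>G\<^esub> x))"
  proof -
    have "\<rho> g * M = msum d d (carrier G) (\<lambda>x. \<rho> g * (complex_of_real (pmf ?\<mu> x) \<cdot>\<^sub>m \<rho> x))"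
      unfolding M_def by (rule msum_mult_left[OF _ rg]) (use rep_carrier[OF rep] in auto)
    also have "\<dots> = msum d d (carrier G) (\<lambda>x. complex_of_real (pmf ?\<mu> x) \<cdot>\<^sub>m \<rho> (g \<otimes>\<^bsub>G\<^esub> x))"
    proof (rule msum_cong)
      fix x assume x: "x \<in> carrier G"
      show "\<rho> g * (complex_of_real (pmf ?\<mu> x) \<cdot>\<^sub>m \<rho> x) = complex_of_real (pmf ?\<mu> x) \<cdot>\<^sub>m \<rho> (g \<otimes>\<^bsub>G\<^esub> x)"
        using mult_smult_distrib[OF rg rep_carrier[OF rep x]] rep_mult[OF rep g x] by simp
    qed
    finally show ?thesis .
  qed
  show ?case unfolding a
  proof (rule eq_matI)
    fix i j assume "i < dim_row (msum d d (carrier G) (\<lambda>x. complex_of_real (pmf ?\<nu> x) \<cdot>\<^sub>m \<rho> x))"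
      "j < dim_col (msum d d (carrier G) (\<lambda>x. complex_of_real (pmf ?\<nu> x) \<cdot>\<^sub>m \<rho> x))"
    hence i: "i < d" and j: "j < d" by auto
    have "PT d \<rho> ((g,p) # xs) = fac d \<rho> g p * M" using IH by (simp add: M_def)
    also have "\<dots> = complex_of_real (1 - p) \<cdot>\<^sub>m M + complex_of_real p \<cdot>\<^sub>m (\<rho> g * M)"
      unfolding fac_def using rg Mc
      by (simp add: add_mult_distrib_mat[of _ d d _ _ d] mult_smult_assoc_mat[of _ d d _ d])
    finally have E0: "PT d \<rho> ((g,p) # xs) $$ (i,j) =
       complex_of_real (1 - p) * M $$ (i,j) + complex_of_real p * (\<rho> g * M) $$ (i,j)"
      using i j Mc rg by simp
    have E1: "M $$ (i,j) = (\<Sum>x\<in>carrier G. complex_of_real (pmf ?\<mu> x) * \<rho> x $$ (i,j))"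
      unfolding M_def using i j by (intro trans[OF msum_index[OF i j]] sum.cong) (auto simp: dims)
    have E2: "(\<rho> g * M) $$ (i,j) = (\<Sum>x\<in>carrier G. complex_of_real (pmf ?\<mu> x) * \<rho> (g \<otimes>\<^bsub>G\<^esub> x) $$ (i,j))"
      unfolding gM using i j gx by (intro trans[OF msum_index[OF i j]] sum.cong) (auto simp: dims)
    have E3: "complex_of_real (1 - p) * (\<Sum>x\<in>carrier G. complex_of_real (pmf ?\<mu> x) * \<rho> x $$ (i,j)) +
       complex_of_real p * (\<Sum>x\<in>carrier G. complex_of_real (pmf ?\<mu> x) * \<rho> (g \<otimes>\<^bsub>G\<^esub> x) $$ (i,j))
       = (\<Sum>z\<in>carrier G. complex_of_real (pmf ?\<nu> z) * \<rho> z $$ (i,j))"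
    proof -
      have swap: "(\<Sum>z\<in>carrier G. complex_of_real (\<Sum>y\<in>carrier G. indicator {z} (g \<otimes>\<^bsub>G\<^esub> y) * pmf ?\<mu> y) * \<rho> z $$ (i,j))
          = (\<Sum>y\<in>carrier G. complex_of_real (pmf ?\<mu> y) * \<rho> (g \<otimes>\<^bsub>G\<^esub> y) $$ (i,j))"
      proof -
        have "(\<Sum>z\<in>carrier G. complex_of_real (\<Sum>y\<in>carrier G. indicator {z} (g \<otimes>\<^bsub>G\<^esub> y) * pmf ?\<mu> y) * \<rho> z $$ (i,j))
          = (\<Sum>z\<in>carrier G. \<Sum>y\<in>carrier G. (if g \<otimes>\<^bsub>G\<^esub> y = z then complex_of_real (pmf ?\<mu> y) * \<rho> z $$ (i,j) else 0))"
          by (simp add: sum_distrib_right indicator_def of_bool_def if_distrib if_distribR cong: if_cong)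
        also have "\<dots> = (\<Sum>y\<in>carrier G. \<Sum>z\<in>carrier G. (if g \<otimes>\<^bsub>G\<^esub> y = z then complex_of_real (pmf ?\<mu> y) * \<rho> z $$ (i,j) else 0))"
          by (rule sum.swap)
        also have "\<dots> = (\<Sum>y\<in>carrier G. complex_of_real (pmf ?\<mu> y) * \<rho> (g \<otimes>\<^bsub>G\<^esub> y) $$ (i,j))"
          using fin gx by (intro sum.cong) (auto simp: sum.delta)
        finally show ?thesis .
      qed
      have "(\<Sum>z\<in>carrier G. complex_of_real (pmf ?\<nu> z) * \<rho> z $$ (i,j))
        = (\<Sum>z\<in>carrier G. complex_of_real p * (complex_of_real (\<Sum>y\<in>carrier G. indicator {z} (g \<otimes>\<^bsub>G\<^esub> y) * pmf ?\<mu> y) * \<rho> z $$ (i,j))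
             + complex_of_real (1 - p) * (complex_of_real (pmf ?\<mu> z) * \<rho> z $$ (i,j)))"
      proof (rule sum.cong[OF refl])
        fix z assume "z \<in> carrier G"
        have e: "pmf ?\<nu> z = p * (\<Sum>y\<in>carrier G. indicator {z} (g \<otimes>\<^bsub>G\<^esub> y) * pmf ?\<mu> y) + (1 - p) * pmf ?\<mu> z"
          by (rule pmf_step[OF grp fin p sub])
        show "complex_of_real (pmf ?\<nu> z) * \<rho> z $$ (i,j) =
          complex_of_real p * (complex_of_real (\<Sum>y\<in>carrier G. indicator {z} (g \<otimes>\<^bsub>G\<^esub> y) * pmf ?\<mu> y) * \<rho> z $$ (i,j))
             + complex_of_real (1 - p) * (complex_of_real (pmf ?\<mu> z) * \<rho> z $$ (i,j))"
          by (simp only: e of_real_add of_real_mult distrib_right mult.assoc)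
      qed
      also have "\<dots> = complex_of_real p * (\<Sum>z\<in>carrier G. complex_of_real (\<Sum>y\<in>carrier G. indicator {z} (g \<otimes>\<^bsub>G\<^esub> y) * pmf ?\<mu> y) * \<rho> z $$ (i,j))
          + complex_of_real (1 - p) * (\<Sum>z\<in>carrier G. complex_of_real (pmf ?\<mu> z) * \<rho> z $$ (i,j))"
        by (simp add: sum.distrib sum_distrib_left)
      finally show ?thesis unfolding swap by simp
    qed
    have E4: "(\<Sum>z\<in>carrier G. complex_of_real (pmf ?\<nu> z) * \<rho> z $$ (i,j)) = msum d d (carrier G) (\<lambda>x. complex_of_real (pmf ?\<nu> x) \<cdot>\<^sub>m \<rho> x) $$ (i,j)"
      using i j by (intro trans[OF _ msum_index[OF i j, symmetric]] sum.cong) (auto simp: dims)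
    show "PT d \<rho> ((g,p) # xs) $$ (i,j) = msum d d (carrier G) (\<lambda>x. complex_of_real (pmf ?\<nu> x) \<cdot>\<^sub>m \<rho> x) $$ (i,j)"
      by (simp only: E0 E1 E2 E3 E4)
  qed (use a IH fac_carrier[where \<rho>=\<rho> and g=g and d=d and p=p, OF rg] in auto)
qed


lemma mat_eq_by_mult_unit:
  assumes A: "(A :: complex mat) \<in> carrier_mat d d" and B: "B \<in> carrier_mat d d"
    and eq: "\<And>j. j < d \<Longrightarrow> A *\<^sub>v unit_vec d j = B *\<^sub>v unit_vec d j"
  shows "A = B"
proof (rule mat_col_eqI)
  fix j assume "j < dim_col B" hence j: "j < d" using B by simp
  show "col A j = col B j" using col_as_mult[OF A j] col_as_mult[OF B j] eq[OF j] by simp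
qed (use A B in auto)

lemma fwd:
  assumes grp: "group G" and fin: "finite (carrier G)" and mg: "mixable_group G"
    and irr: "irreducible_rep G d \<rho>" and nt: "\<not> trivial_rep G d \<rho>"
  shows "mixable_rep G d \<rho>"
proof -
  interpret group G by fact
  obtain xs where xs: "valid G xs" and mu: "mix_pmf G xs = pmf_of_set (carrier G)"
    using mg unfolding mixable_group_def valid_def by blast
  have rep: "representation G d \<rho>" using irr by (simp add: irreducible_rep_def)
  have ne: "carrier G \<noteq> {}" by auto
  define c where "c = complex_of_real (1 / real (card (carrier G)))"
  define A where "A = PT d \<rho> xs"
  have Ac: "A \<in> carrier_mat d d" unfolding A_def by (rule PT_carrier) (use xs rep in \<open>auto intro: valid_rep_carrier\<close>)
  have A: "A = msum d d (carrier G) (\<lambda>x. c \<cdot>\<^sub>m \<rho> x)"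
    unfolding A_def product_formula[OF grp fin rep xs] mu
    by (rule msum_cong) (use ne fin in \<open>simp add: c_def\<close>)
  have rA: "\<rho> h * A = A" if h: "h \<in> carrier G" for h
  proof -
    have "\<rho> h * A = msum d d (carrier G) (\<lambda>x. \<rho> h * (c \<cdot>\<^sub>m \<rho> x))"
      unfolding A by (rule msum_mult_left[OF _ rep_carrier[OF rep h]]) (use rep_carrier[OF rep] in auto)
    also have "\<dots> = msum d d (carrier G) (\<lambda>x. c \<cdot>\<^sub>m \<rho> (h \<otimes>\<^bsub>G\<^esub> x))"
    proof (rule msum_cong)
      fix x assume x: "x \<in> carrier G"
      show "\<rho> h * (c \<cdot>\<^sub>m \<rho> x) = c \<cdot>\<^sub>m \<rho> (h \<otimes>\<^bsub>G\<^esub> x)"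
        using mult_smult_distrib[OF rep_carrier[OF rep h] rep_carrier[OF rep x]] rep_mult[OF rep h x] by simp
    qed
    also have "\<dots> = msum d d (carrier G) (\<lambda>x. c \<cdot>\<^sub>m \<rho> x)"
      by (rule msum_reindex[OF group_bij_left[OF grp h], of _ _ "\<lambda>y. c \<cdot>\<^sub>m \<rho> y"])
    finally show ?thesis using A by simp
  qed
  define F where "F = {u \<in> carrier_vec d. \<forall>h\<in>carrier G. \<rho> h *\<^sub>v u = u}"
  have rc: "\<rho> h \<in> carrier_mat d d" if "h \<in> carrier G" for h using rep_carrier[OF rep that] .
  have invF: "invariant_subspace G d \<rho> F"
    unfolding invariant_subspace_def
  proof (intro conjI ballI allI)
    show "F \<subseteq> carrier_vec d" by (auto simp: F_def)
    show "0\<^sub>v d \<in> F" using rc by (auto simp: F_def)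
    fix v assume v: "v \<in> F"
    hence vc: "v \<in> carrier_vec d" and vf: "\<And>h. h \<in> carrier G \<Longrightarrow> \<rho> h *\<^sub>v v = v" by (auto simp: F_def)
    { fix w assume "w \<in> F"
      hence wc: "w \<in> carrier_vec d" and wf: "\<And>h. h \<in> carrier G \<Longrightarrow> \<rho> h *\<^sub>v w = w" by (auto simp: F_def)
      show "v + w \<in> F" unfolding F_def using vc wc vf wf rc
        by (auto simp: mult_add_distrib_mat_vec[OF rc]) }
    { fix k :: complex
      show "k \<cdot>\<^sub>v v \<in> F" unfolding F_def using vc vf rc by (auto simp: mult_mat_vec[OF rc]) }
    { fix g assume "g \<in> carrier G"
      thus "\<rho> g *\<^sub>v v \<in> F" using v vf by simp }
  qed
  have d0: "d > 0" using irr by (simp add: irreducible_rep_def)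
  have "F = {0\<^sub>v d} \<or> F = carrier_vec d" using irr invF by (simp add: irreducible_rep_def)
  moreover have "F \<noteq> carrier_vec d"
  proof
    assume FC: "F = carrier_vec d"
    have "\<rho> g = 1\<^sub>m d" if g: "g \<in> carrier G" for g
    proof (rule mat_eq_by_mult_unit[OF rc[OF g] one_carrier_mat])
      fix j assume "j < d"
      have "unit_vec d j \<in> F" using FC by simp
      thus "\<rho> g *\<^sub>v unit_vec d j = 1\<^sub>m d *\<^sub>v unit_vec d j" using g by (simp add: F_def)
    qed
    with nt show False by (simp add: trivial_rep_def)
  qed
  ultimately have F0: "F = {0\<^sub>v d}" by simp
  have A0: "A = 0\<^sub>m d d"
  proof (rule mat_eq_by_mult_unit[OF Ac zero_carrier_mat])
    fix j assume j: "j < d"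
    have "A *\<^sub>v unit_vec d j \<in> F"
      unfolding F_def
    proof (intro CollectI conjI ballI)
      show "A *\<^sub>v unit_vec d j \<in> carrier_vec d" using Ac by simp
      fix h assume h: "h \<in> carrier G"
      have "\<rho> h *\<^sub>v (A *\<^sub>v unit_vec d j) = (\<rho> h * A) *\<^sub>v unit_vec d j" using rc[OF h] Ac by simp
      thus "\<rho> h *\<^sub>v (A *\<^sub>v unit_vec d j) = A *\<^sub>v unit_vec d j" using rA[OF h] by simp
    qed
    thus "A *\<^sub>v unit_vec d j = 0\<^sub>m d d *\<^sub>v unit_vec d j" using F0 zero_mat_mult_vec[of "unit_vec d j" d d] by simp
  qed
  show ?thesis unfolding mixable_rep_def
    by (rule exI[of _ xs]) (use xs A0 in \<open>simp add: valid_def A_def PT_def\<close>)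
qed


lemma bwd:
  assumes grp: "group G" and fin: "finite (carrier G)"
    and H: "\<forall>(d::nat) (\<rho>::'a \<Rightarrow> complex mat). irreducible_rep G d \<rho> \<and> \<not> trivial_rep G d \<rho> \<longrightarrow> mixable_rep G d \<rho>"
  shows "mixable_group G"
proof -
  interpret group G by fact
  define n where "n = card (carrier G)"
  obtain e where e: "bij_betw e {0..<n} (carrier G)" using ex_bij_betw_nat_finite[OF fin] by (auto simp: n_def)
  define idx where "idx = inv_into {0..<n} e"
  have e_in: "e i \<in> carrier G" if "i < n" for i using e that by (auto simp: bij_betw_def)
  have idx_lt: "idx x < n" if "x \<in> carrier G" for x
    using e that unfolding idx_def bij_betw_def by (metis atLeastLessThan_iff inv_into_into)
  have e_idx: "e (idx x) = x" if "x \<in> carrier G" for x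
    using e that unfolding idx_def bij_betw_def by (simp add: f_inv_into_f)
  have e_inj: "e i = e j \<longleftrightarrow> i = j" if "i < n" "j < n" for i j
    using e that unfolding bij_betw_def inj_on_def by auto
  define R where "R g = mat n n (\<lambda>(i,j). if e i = g \<otimes>\<^bsub>G\<^esub> e j then 1 else (0::complex))" for g
  have Rc: "R g \<in> carrier_mat n n" for g by (simp add: R_def)
  have rep: "representation G n R"
    unfolding representation_def
  proof (intro conjI ballI)
    show "R g \<in> carrier_mat n n" for g by (rule Rc)
    show "R \<one>\<^bsub>G\<^esub> = 1\<^sub>m n"
      by (rule eq_matI) (auto simp: R_def e_in e_inj)
    fix g h assume g: "g \<in> carrier G" and h: "h \<in> carrier G"
    show "R (g \<otimes>\<^bsub>G\<^esub> h) = R g * R h"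
    proof (rule eq_matI)
      fix i j assume "i < dim_row (R g * R h)" "j < dim_col (R g * R h)"
      hence i: "i < n" and j: "j < n" by (simp_all add: R_def)
      define l0 where "l0 = idx (h \<otimes>\<^bsub>G\<^esub> e j)"
      have hej: "h \<otimes>\<^bsub>G\<^esub> e j \<in> carrier G" using h e_in[OF j] by simp
      have l0: "l0 < n" "e l0 = h \<otimes>\<^bsub>G\<^esub> e j" using idx_lt[OF hej] e_idx[OF hej] by (auto simp: l0_def)
      have "(R g * R h) $$ (i,j) = (\<Sum>l<n. R g $$ (i,l) * R h $$ (l,j))"
        using i j by (intro mult_mat_index_sum[OF Rc Rc])
      also have "\<dots> = (\<Sum>l<n. if l = l0 then R g $$ (i,l0) else 0)"
      proof (rule sum.cong[OF refl])
        fix l assume "l \<in> {..<n}"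
        hence l: "l < n" by simp
        have "e l = h \<otimes>\<^bsub>G\<^esub> e j \<longleftrightarrow> l = l0" using l0 e_inj[OF l l0(1)] by auto
        thus "R g $$ (i,l) * R h $$ (l,j) = (if l = l0 then R g $$ (i,l0) else 0)"
          using l j i by (auto simp: R_def)
      qed
      also have "\<dots> = R g $$ (i,l0)" using l0 by (simp add: sum.delta)
      also have "\<dots> = R (g \<otimes>\<^bsub>G\<^esub> h) $$ (i,j)"
        using i j l0 g h e_in[OF j] by (simp add: R_def m_assoc)
      finally show "R (g \<otimes>\<^bsub>G\<^esub> h) $$ (i,j) = (R g * R h) $$ (i,j)" by simp
    qed (simp_all add: R_def)
  qed
  obtain xs where xs: "valid G xs"
    and fx: "\<forall>g\<in>carrier G. \<forall>v\<in>carrier_vec n. R g *\<^sub>v (PT n R xs *\<^sub>v v) = PT n R xs *\<^sub>v v"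
    using claim[OF grp fin H rep] by blast
  let ?\<mu> = "mix_pmf G xs"
  define T where "T = PT n R xs"
  have Tm: "T = msum n n (carrier G) (\<lambda>x. complex_of_real (pmf ?\<mu> x) \<cdot>\<^sub>m R x)"
    unfolding T_def by (rule product_formula[OF grp fin rep xs])
  have one: "\<one>\<^bsub>G\<^esub> \<in> carrier G" by simp
  define j0 where "j0 = idx \<one>\<^bsub>G\<^esub>"
  have j0: "j0 < n" "e j0 = \<one>\<^bsub>G\<^esub>" using idx_lt[OF one] e_idx[OF one] by (auto simp: j0_def)
  define c where "c = T *\<^sub>v unit_vec n j0"
  have Tc: "T \<in> carrier_mat n n" using Tm by simp
  have ci: "c $ i = complex_of_real (pmf ?\<mu> (e i))" if i: "i < n" for i
  proof -
    have "c $ i = T $$ (i,j0)" using i j0 Tc by (simp add: c_def)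
    also have "\<dots> = (\<Sum>x\<in>carrier G. complex_of_real (pmf ?\<mu> x) * R x $$ (i,j0))"
      unfolding Tm using i j0 by (simp add: msum_index R_def)
    also have "\<dots> = (\<Sum>x\<in>carrier G. if x = e i then complex_of_real (pmf ?\<mu> x) else 0)"
      using i j0 by (intro sum.cong) (auto simp: R_def)
    also have "\<dots> = complex_of_real (pmf ?\<mu> (e i))" using fin e_in[OF i] by (simp add: sum.delta')
    finally show ?thesis .
  qed
  have inv_eq: "pmf ?\<mu> (e i) = pmf ?\<mu> (inv\<^bsub>G\<^esub> g \<otimes>\<^bsub>G\<^esub> e i)" if g: "g \<in> carrier G" and i: "i < n" for g i
  proof -
    have x1: "inv\<^bsub>G\<^esub> g \<otimes>\<^bsub>G\<^esub> e i \<in> carrier G" using g e_in[OF i] by simp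
    define l1 where "l1 = idx (inv\<^bsub>G\<^esub> g \<otimes>\<^bsub>G\<^esub> e i)"
    have l1: "l1 < n" "e l1 = inv\<^bsub>G\<^esub> g \<otimes>\<^bsub>G\<^esub> e i" using idx_lt[OF x1] e_idx[OF x1] by (auto simp: l1_def)
    have cc: "c \<in> carrier_vec n" using Tc by (simp add: c_def)
    have "R g *\<^sub>v c = c" using fx g by (simp add: c_def T_def)
    hence "c $ i = (R g *\<^sub>v c) $ i" by simp
    also have "\<dots> = (\<Sum>l<n. R g $$ (i,l) * c $ l)" by (rule mult_vec_index_sum[OF Rc cc i])
    also have "\<dots> = (\<Sum>l<n. if l = l1 then c $ l1 else 0)"
    proof (rule sum.cong[OF refl])
      fix l assume "l \<in> {..<n}"
      hence l: "l < n" by simp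
      have "e i = g \<otimes>\<^bsub>G\<^esub> e l \<longleftrightarrow> e l = inv\<^bsub>G\<^esub> g \<otimes>\<^bsub>G\<^esub> e i"
        using inv_solve_left[OF e_in[OF l] g e_in[OF i]] by auto
      also have "\<dots> \<longleftrightarrow> l = l1" using l1 e_inj[OF l l1(1)] by auto
      finally show "R g $$ (i,l) * c $ l = (if l = l1 then c $ l1 else 0)"
        using l i by (auto simp: R_def)
    qed
    also have "\<dots> = c $ l1" using l1 by (simp add: sum.delta)
    finally have "c $ i = c $ l1" .
    thus ?thesis using ci[OF i] ci[OF l1(1)] l1(2) by simp
  qed
  have const: "pmf ?\<mu> x = pmf ?\<mu> \<one>\<^bsub>G\<^esub>" if x: "x \<in> carrier G" for x
    using inv_eq[OF x idx_lt[OF x]] e_idx[OF x] x by simp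
  have sub: "set_pmf ?\<mu> \<subseteq> carrier G" by (rule set_mix[OF grp xs])
  have "(\<Sum>x\<in>carrier G. pmf ?\<mu> x) = 1" by (rule sum_pmf_eq_1[OF fin sub])
  moreover have "(\<Sum>x\<in>carrier G. pmf ?\<mu> x) = (\<Sum>x\<in>carrier G. pmf ?\<mu> \<one>\<^bsub>G\<^esub>)"
    by (rule sum.cong[OF refl]) (rule const)
  ultimately have "real n * pmf ?\<mu> \<one>\<^bsub>G\<^esub> = 1" by (simp add: n_def)
  hence val: "pmf ?\<mu> \<one>\<^bsub>G\<^esub> = 1 / real n"
  proof -
    assume e1: "real n * pmf ?\<mu> \<one>\<^bsub>G\<^esub> = 1"
    have nz: "real n \<noteq> 0"
    proof
      assume "real n = 0" with e1 show False by simp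
    qed
    show ?thesis using e1 nz by (simp add: eq_divide_eq mult.commute)
  qed
  have ne: "carrier G \<noteq> {}" using one by blast
  have "?\<mu> = pmf_of_set (carrier G)"
  proof (rule pmf_eqI)
    fix z
    show "pmf ?\<mu> z = pmf (pmf_of_set (carrier G)) z"
    proof (cases "z \<in> carrier G")
      case True
      have "pmf ?\<mu> z = 1 / real n" using const[OF True] val by simp
      thus ?thesis using True ne fin by (simp add: n_def)
    next
      case False
      hence "z \<notin> set_pmf ?\<mu>" using sub by blast
      thus ?thesis using False ne fin by (simp add: set_pmf_eq)
    qed
  qed
  thus ?thesis unfolding mixable_group_def using xs by (auto simp: valid_def)
qed

theorem mainTheorem12:
  fixes G :: "('a, 'b) monoid_scheme"
  assumes "group G" and "finite (carrier G)"
  shows "mixable_group G \<longleftrightarrow>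
    (\<forall>(d::nat) (\<rho>::'a \<Rightarrow> complex mat).
       irreducible_rep G d \<rho> \<and> \<not> trivial_rep G d \<rho> \<longrightarrow> mixable_rep G d \<rho>)"
  using fwd[OF assms] bwd[OF assms] by blast


end
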